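(* Let $\mathcal W$ be a discrete memoryless channel from a finite set $\mathcal X$ to a finite set $\mathcal Y$. For every fixed integer $M\ge2$, $$\liminf_{n\to\infty}-\frac1n\log\epsilon^{\rm NS}(M,\mathcal W^{\times n})=U(\mathcal W).$$
   Context: For probability distributions $P,Q$ on a finite set, $D(P\|Q)=\sum_x P(x)\log\frac{P(x)}{Q(x)}$ (with $0\log(0/q)=0$, and $+\infty$ if $P\not\ll Q$). A discrete memoryless channel $\mathcal W$ from $\mathcal X$ to $\mathcal Y$ is a stochastic matrix $(\mathcal W(y|x))$; $\mathcal W^{\times n}(y^n|x^n)=\prod_{i}\mathcal W(y_i|x_i)$. The channel umlaut information is $U(\mathcal W)=\max_{P_X\in\mathcal P(\mathcal X)}\min_{Q_Y\in\mathcal P(\mathcal Y)}D(P_X\times Q_Y\|P_{XY})$ with $P_{XY}(x,y)=P_X(x)\mathcal W(y|x)$. An NS code for message set $[M]$ and channel $\mathcal W$ is a conditional distribution $\mathcal Z(x,\hat w\mid y,w)$ ($x\in\mathcal X$, $\hat w,w\in[M]$, $y\in\mathcal Y$) such that $\sum_x\mathcal Z(x,\hat w\mid y,w)$ does not depend on $w$ and $\sum_{\hat w}\mathcal Z(x,\hat w\mid y,w)$ does not depend on $y$. Its error probability (uniform messages) is $1-\frac1M\sum_{w}\sum_{x,y}\mathcal W(y|x)\mathcal Z(x,w\mid y,w)$; $\epsilon^{\rm NS}(M,\mathcal W)$ is the minimum over NS codes. *)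

theory Defs
  imports Complex_Main "HOL-Library.Extended_Real" "HOL-Library.Liminf_Limsup"
begin

definition is_distr :: "('a::finite \<Rightarrow> real) \<Rightarrow> bool" where
  "is_distr P \<longleftrightarrow> (\<forall>a. 0 \<le> P a) \<and> (\<Sum>a\<in>UNIV. P a) = 1"

text \<open>Relative entropy (natural logarithm), with value +infinity if P is not
  absolutely continuous w.r.t. Q, and the convention 0 log(0/q) = 0.\<close>
definition KL_div :: "('a::finite \<Rightarrow> real) \<Rightarrow> ('a \<Rightarrow> real) \<Rightarrow> ereal" where
  "KL_div P Q = (if \<exists>a. P a > 0 \<and> Q a = 0 then \<infinity>
                 else ereal (\<Sum>a\<in>{a. P a > 0}. P a * ln (P a / Q a)))"

text \<open>A DMC from 'x to 'y: W x y = W(y|x).\<close>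
definition is_channel :: "('x::finite \<Rightarrow> 'y::finite \<Rightarrow> real) \<Rightarrow> bool" where
  "is_channel W \<longleftrightarrow> (\<forall>x. is_distr (W x))"

definition umlaut_info :: "('x::finite \<Rightarrow> 'y::finite \<Rightarrow> real) \<Rightarrow> ereal" where
  "umlaut_info W =
     (SUP P\<in>{P. is_distr P}. INF Q\<in>{Q. is_distr Q}.
        KL_div (\<lambda>(x, y). P x * Q y) (\<lambda>(x, y). P x * W x y))"

definition words :: "nat \<Rightarrow> 'a list set" where
  "words n = {xs. length xs = n}"

definition channel_pow :: "nat \<Rightarrow> ('x \<Rightarrow> 'y \<Rightarrow> real) \<Rightarrow> 'x list \<Rightarrow> 'y list \<Rightarrow> real" where
  "channel_pow n W xs ys = (\<Prod>i<n. W (xs ! i) (ys ! i))"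

text \<open>NS codes for message set [M] = {0..<M}, channel with input set A and output set B.
  Z x v y w = Z(x, \<hat>w = v | y, w).\<close>
definition is_NS_code ::
  "nat \<Rightarrow> 'a set \<Rightarrow> 'b set \<Rightarrow> ('a \<Rightarrow> nat \<Rightarrow> 'b \<Rightarrow> nat \<Rightarrow> real) \<Rightarrow> bool" where
  "is_NS_code M A B Z \<longleftrightarrow>
     (\<forall>x\<in>A. \<forall>v<M. \<forall>y\<in>B. \<forall>w<M. 0 \<le> Z x v y w) \<and>
     (\<forall>y\<in>B. \<forall>w<M. (\<Sum>x\<in>A. \<Sum>v<M. Z x v y w) = 1) \<and>
     (\<forall>v<M. \<forall>y\<in>B. \<forall>w<M. \<forall>w'<M. (\<Sum>x\<in>A. Z x v y w) = (\<Sum>x\<in>A. Z x v y w')) \<and>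
     (\<forall>x\<in>A. \<forall>w<M. \<forall>y\<in>B. \<forall>y'\<in>B. (\<Sum>v<M. Z x v y w) = (\<Sum>v<M. Z x v y' w))"

definition NS_error ::
  "nat \<Rightarrow> 'a set \<Rightarrow> 'b set \<Rightarrow> ('a \<Rightarrow> 'b \<Rightarrow> real) \<Rightarrow> ('a \<Rightarrow> nat \<Rightarrow> 'b \<Rightarrow> nat \<Rightarrow> real) \<Rightarrow> real" where
  "NS_error M A B W Z =
     1 - (1 / real M) * (\<Sum>w<M. \<Sum>x\<in>A. \<Sum>y\<in>B. W x y * Z x w y w)"

definition eps_NS :: "nat \<Rightarrow> 'a set \<Rightarrow> 'b set \<Rightarrow> ('a \<Rightarrow> 'b \<Rightarrow> real) \<Rightarrow> real" where
  "eps_NS M A B W = Inf {NS_error M A B W Z | Z. is_NS_code M A B Z}"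

definition neg_log_rate :: "nat \<Rightarrow> real \<Rightarrow> ereal" where
  "neg_log_rate n e = (if e \<le> 0 then \<infinity> else ereal (- ln e / real n))"

end

theory Submission
  imports Defs "HOL-Analysis.Analysis"
begin


lemma words_Suc: "words (Suc n) = (\<lambda>(a,xs). a#xs) ` (UNIV \<times> words n)"
  unfolding words_def by (auto simp: image_iff length_Suc_conv)

lemma words_0: "words 0 = {[]}" unfolding words_def by auto

lemma finite_words[simp]: "finite (words n :: 'a::finite list set)"
proof -
  have "words n = {xs::'a list. set xs \<subseteq> UNIV \<and> length xs = n}" unfolding words_def by auto
  then show ?thesis using finite_lists_length_eq[of "UNIV::'a set" n] by simp
qed

lemma sum_words_Suc:
  fixes G :: "'a::finite list \<Rightarrow> 'b::comm_monoid_add"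
  shows "(\<Sum>zs\<in>words (Suc n). G zs) = (\<Sum>a\<in>UNIV. \<Sum>xs\<in>words n. G (a#xs))"
proof -
  have inj: "inj_on (\<lambda>(a,xs). a#xs) (UNIV \<times> words n)" by (auto simp: inj_on_def)
  have "(\<Sum>zs\<in>words (Suc n). G zs) = (\<Sum>p\<in>UNIV \<times> words n. G ((\<lambda>(a,xs). a#xs) p))"
    unfolding words_Suc by (rule sum.reindex[OF inj, unfolded comp_def])
  also have "\<dots> = (\<Sum>a\<in>UNIV. \<Sum>xs\<in>words n. G (a#xs))"
    unfolding sum.cartesian_product by (simp add: case_prod_unfold)
  finally show ?thesis .
qed

lemma sum_words_prod:
  fixes f :: "nat \<Rightarrow> 'a::finite \<Rightarrow> real"
  shows "(\<Sum>xs\<in>words n. \<Prod>i<n. f i (xs!i)) = (\<Prod>i<n. \<Sum>a\<in>UNIV. f i a)"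
proof (induction n arbitrary: f)
  case 0 then show ?case by (simp add: words_0)
next
  case (Suc n)
  have "(\<Sum>xs\<in>words (Suc n). \<Prod>i<Suc n. f i (xs!i))
      = (\<Sum>a\<in>UNIV. \<Sum>xs\<in>words n. f 0 a * (\<Prod>i<n. f (Suc i) (xs!i)))"
    unfolding sum_words_Suc by (simp del: prod.lessThan_Suc add: prod.lessThan_Suc_shift)
  also have "\<dots> = (\<Sum>a\<in>UNIV. f 0 a * (\<Prod>i<n. \<Sum>b\<in>UNIV. f (Suc i) b))"
    using Suc.IH[where f="\<lambda>i. f (Suc i)"] by (simp add: sum_distrib_left[symmetric])
  also have "\<dots> = (\<Prod>i<Suc n. \<Sum>a\<in>UNIV. f i a)"
    by (simp del: prod.lessThan_Suc add: prod.lessThan_Suc_shift sum_distrib_right)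
  finally show ?case .
qed

definition pw :: "('a \<Rightarrow> real) \<Rightarrow> nat \<Rightarrow> 'a list \<Rightarrow> real" where
  "pw p n xs = (\<Prod>i<n. p (xs!i))"

lemma pw_Suc: "pw p (Suc n) (a#xs) = p a * pw p n xs"
  unfolding pw_def by (simp del: prod.lessThan_Suc add: prod.lessThan_Suc_shift)

lemma pw_nonneg: "(\<And>a. 0 \<le> p a) \<Longrightarrow> 0 \<le> pw p n xs"
  unfolding pw_def by (simp add: prod_nonneg)

lemma sum_pw:
  fixes p :: "'a::finite \<Rightarrow> real"
  assumes "sum p UNIV = 1" shows "(\<Sum>xs\<in>words n. pw p n xs) = 1"
  unfolding pw_def using sum_words_prod[where n=n and f="\<lambda>i. p"] assms by simp

lemma sum_words_var:
  fixes p :: "'a::finite \<Rightarrow> real" and d :: "nat \<Rightarrow> 'a \<Rightarrow> real"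
  assumes p1: "sum p UNIV = 1" and d0: "\<And>i. (\<Sum>a\<in>UNIV. p a * d i a) = 0"
  shows "(\<Sum>xs\<in>words n. pw p n xs * (\<Sum>i<n. d i (xs!i))\<^sup>2) = (\<Sum>i<n. \<Sum>a\<in>UNIV. p a * (d i a)\<^sup>2)"
  using d0
proof (induction n arbitrary: d)
  case 0 then show ?case by (simp add: words_0 pw_def)
next
  case (Suc n)
  define D where "D xs = (\<Sum>i<n. d (Suc i) (xs!i))" for xs
  have IH: "(\<Sum>xs\<in>words n. pw p n xs * (D xs)\<^sup>2) = (\<Sum>i<n. \<Sum>a\<in>UNIV. p a * (d (Suc i) a)\<^sup>2)"
    unfolding D_def by (rule Suc.IH) (rule Suc.prems)
  have E0: "(\<Sum>xs\<in>words n. pw p n xs * D xs) = 0"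
  proof -
    have "(\<Sum>xs\<in>words n. pw p n xs * D xs) = (\<Sum>i<n. \<Sum>xs\<in>words n. pw p n xs * d (Suc i) (xs!i))"
      unfolding D_def by (simp add: sum_distrib_left sum.swap[of _ "words n"])
    also have "\<dots> = 0"
    proof (rule sum.neutral, rule ballI)
      fix i assume i: "i \<in> {..<n}"
      have "(\<Sum>xs\<in>words n. pw p n xs * d (Suc i) (xs!i))
          = (\<Sum>xs\<in>words n. \<Prod>j<n. (if j = i then p (xs!j) * d (Suc i) (xs!j) else p (xs!j)))"
      proof (rule sum.cong[OF refl])
        fix xs
        have rm: "(\<Prod>j<n. g j) = g i * (\<Prod>j\<in>{..<n}-{i}. g j)" for g :: "nat \<Rightarrow> real"
          using prod.remove[of "{..<n}" i g] i by simp
        have "(\<Prod>j<n. (if j = i then p (xs!j) * d (Suc i) (xs!j) else p (xs!j)))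
              = p (xs!i) * d (Suc i) (xs!i) * (\<Prod>j\<in>{..<n}-{i}. p (xs!j))"
          by (subst rm) (auto intro!: prod.cong)
        also have "\<dots> = (\<Prod>j<n. p (xs!j)) * d (Suc i) (xs!i)"
          by (subst rm[of "\<lambda>j. p (xs!j)"]) simp
        finally have "(\<Prod>j<n. (if j = i then p (xs!j) * d (Suc i) (xs!j) else p (xs!j)))
              = (\<Prod>j<n. p (xs!j)) * d (Suc i) (xs!i)" .
        then show "pw p n xs * d (Suc i) (xs!i) = (\<Prod>j<n. (if j = i then p (xs!j) * d (Suc i) (xs!j) else p (xs!j)))"
          unfolding pw_def by simp
      qed
      also have "\<dots> = (\<Prod>j<n. \<Sum>a\<in>UNIV. (if j = i then p a * d (Suc i) a else p a))"
        by (rule sum_words_prod[where n=n and f="\<lambda>j a. if j = i then p a * d (Suc i) a else p a"])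
      also have "\<dots> = 0" using i Suc.prems[of "Suc i"]
        by (intro prod_zero) (auto intro!: bexI[of _ i])
      finally show "(\<Sum>xs\<in>words n. pw p n xs * d (Suc i) (xs!i)) = 0" .
    qed
    finally show ?thesis .
  qed
  have "(\<Sum>xs\<in>words (Suc n). pw p (Suc n) xs * (\<Sum>i<Suc n. d i (xs!i))\<^sup>2)
      = (\<Sum>a\<in>UNIV. \<Sum>xs\<in>words n. p a * pw p n xs * (d 0 a + D xs)\<^sup>2)"
    unfolding sum_words_Suc D_def by (simp del: sum.lessThan_Suc add: pw_Suc sum.lessThan_Suc_shift mult.assoc)
  also have "\<dots> = (\<Sum>a\<in>UNIV. p a * (d 0 a)\<^sup>2 * (\<Sum>xs\<in>words n. pw p n xs)
                 + 2 * (p a * d 0 a) * (\<Sum>xs\<in>words n. pw p n xs * D xs)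
                 + p a * (\<Sum>xs\<in>words n. pw p n xs * (D xs)\<^sup>2))"
    by (simp add: power2_eq_square algebra_simps sum.distrib sum_distrib_left)
  also have "\<dots> = (\<Sum>a\<in>UNIV. p a * (d 0 a)\<^sup>2) + (\<Sum>a\<in>UNIV. p a) * (\<Sum>xs\<in>words n. pw p n xs * (D xs)\<^sup>2)"
    by (simp add: E0 sum_pw[OF p1] sum.distrib sum_distrib_right)
  also have "\<dots> = (\<Sum>i<Suc n. \<Sum>a\<in>UNIV. p a * (d i a)\<^sup>2)"
    by (simp del: sum.lessThan_Suc add: p1 IH sum.lessThan_Suc_shift)
  finally show ?case .
qed



lemma cheb:
  fixes q D :: "'a \<Rightarrow> real"
  assumes "finite A" "\<And>x. x \<in> A \<Longrightarrow> 0 \<le> q x" "t > 0"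
  shows "(\<Sum>x\<in>A. if t \<le> D x then q x else 0) \<le> (\<Sum>x\<in>A. q x * (D x)\<^sup>2) / t\<^sup>2"
proof -
  have "(\<Sum>x\<in>A. if t \<le> D x then q x else 0) \<le> (\<Sum>x\<in>A. q x * (D x)\<^sup>2 / t\<^sup>2)"
  proof (rule sum_mono)
    fix x assume x: "x \<in> A"
    show "(if t \<le> D x then q x else 0) \<le> q x * (D x)\<^sup>2 / t\<^sup>2"
    proof (cases "t \<le> D x")
      case True
      then have "t\<^sup>2 \<le> (D x)\<^sup>2" using assms(3) by (intro power_mono) auto
      then have "1 \<le> (D x)\<^sup>2 / t\<^sup>2" using assms(3) by simp
      then have "q x * 1 \<le> q x * ((D x)\<^sup>2 / t\<^sup>2)" using assms(2)[OF x] by (intro mult_left_mono) auto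
      then show ?thesis using True by simp
    next
      case False then show ?thesis using assms(2)[OF x] by simp
    qed
  qed
  also have "\<dots> = (\<Sum>x\<in>A. q x * (D x)\<^sup>2) / t\<^sup>2" by (simp add: sum_divide_distrib)
  finally show ?thesis .
qed

lemma sum_if_eq_w:
  fixes a b :: real
  assumes "w < M"
  shows "(\<Sum>v<M. if v = w then a else b) = a + (real M - 1) * b"
proof -
  have "(\<Sum>v<M. if v = w then a else b) = (\<Sum>v<M. b + (if v = w then a - b else 0))"
    by (rule sum.cong) auto
  also have "\<dots> = real M * b + (a - b)" using assms by (simp add: sum.distrib)
  finally show ?thesis by (simp add: algebra_simps)
qed

lemma NS_construct:
  fixes A :: "'a set" and B :: "'b set" and W :: "'a \<Rightarrow> 'b \<Rightarrow> real"
  assumes M: "M \<ge> 2" and fA: "finite A" and fB: "finite B"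
    and P0: "\<And>x. x \<in> A \<Longrightarrow> 0 \<le> P x" and P1: "sum P A = 1"
    and T: "\<And>x y. x \<in> A \<Longrightarrow> y \<in> B \<Longrightarrow> 0 \<le> T x y \<and> T x y \<le> P x"
    and Tsum: "\<And>y. y \<in> B \<Longrightarrow> (\<Sum>x\<in>A. T x y) = 1 - 1 / real M"
    and W1: "\<And>x. x \<in> A \<Longrightarrow> (\<Sum>y\<in>B. W x y) = 1"
  shows "\<exists>Z. is_NS_code M A B Z \<and> NS_error M A B W Z = (\<Sum>x\<in>A. \<Sum>y\<in>B. W x y * T x y)"
proof -
  define Z where "Z x (v::nat) y (w::nat) = (if v = w then P x - T x y else T x y / (real M - 1))" for x v y w
  have Mr: "real M - 1 > 0" using M by simp
  have zsum_v: "(\<Sum>v<M. Z x v y w) = P x" if "w < M" for x y w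
    unfolding Z_def using sum_if_eq_w[OF that, of "P x - T x y" "T x y / (real M - 1)"] Mr by simp
  have zsum_x: "(\<Sum>x\<in>A. Z x v y w) = 1 / real M" if "y \<in> B" for v y w
  proof (cases "v = w")
    case True
    then show ?thesis unfolding Z_def using Tsum[OF that] P1 by (simp add: sum_subtractf)
  next
    case False
    then have "(\<Sum>x\<in>A. Z x v y w) = (1 - 1 / real M) / (real M - 1)"
      unfolding Z_def using Tsum[OF that] by (simp add: sum_divide_distrib[symmetric])
    also have "\<dots> = 1 / real M" using Mr M by (simp add: field_simps)
    finally show ?thesis .
  qed
  have code: "is_NS_code M A B Z"
    unfolding is_NS_code_def
  proof (intro conjI ballI allI impI)
    fix x v y w assume "x \<in> A" "y \<in> B"
    then show "0 \<le> Z x v y w" unfolding Z_def using T[of x y] Mr by auto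
  next
    fix y w assume y: "y \<in> B" and w: "w < M"
    have "(\<Sum>x\<in>A. \<Sum>v<M. Z x v y w) = sum P A" using zsum_v[OF w] by simp
    then show "(\<Sum>x\<in>A. \<Sum>v<M. Z x v y w) = 1" using P1 by simp
  next
    fix v y w w' assume "y \<in> B"
    then show "(\<Sum>x\<in>A. Z x v y w) = (\<Sum>x\<in>A. Z x v y w')" using zsum_x by simp
  next
    fix x w y y' assume "w < M"
    then show "(\<Sum>v<M. Z x v y w) = (\<Sum>v<M. Z x v y' w)" using zsum_v by simp
  qed
  have "(\<Sum>w<M. \<Sum>x\<in>A. \<Sum>y\<in>B. W x y * Z x w y w) = real M * (\<Sum>x\<in>A. \<Sum>y\<in>B. W x y * (P x - T x y))"
    unfolding Z_def by simp
  also have "(\<Sum>x\<in>A. \<Sum>y\<in>B. W x y * (P x - T x y)) = (\<Sum>x\<in>A. P x * (\<Sum>y\<in>B. W x y)) - (\<Sum>x\<in>A. \<Sum>y\<in>B. W x y * T x y)"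
    by (simp add: algebra_simps sum_subtractf sum_distrib_left)
  also have "(\<Sum>x\<in>A. P x * (\<Sum>y\<in>B. W x y)) = 1" using W1 P1 by simp
  finally have "NS_error M A B W Z = (\<Sum>x\<in>A. \<Sum>y\<in>B. W x y * T x y)"
    unfolding NS_error_def using M by simp
  with code show ?thesis by blast
qed

lemma NS_extract:
  fixes A :: "'a set" and B :: "'b set" and W :: "'a \<Rightarrow> 'b \<Rightarrow> real"
  assumes M: "M \<ge> 1" and fA: "finite A" and fB: "finite B" and y0: "y0 \<in> B"
    and Z: "is_NS_code M A B Z"
    and W1: "\<And>x. x \<in> A \<Longrightarrow> (\<Sum>y\<in>B. W x y) = 1"
  shows "\<exists>P T. (\<forall>x\<in>A. 0 \<le> P x) \<and> sum P A = 1 \<and>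
     (\<forall>x\<in>A. \<forall>y\<in>B. 0 \<le> T x y \<and> T x y \<le> P x) \<and>
     (\<forall>y\<in>B. (\<Sum>x\<in>A. T x y) = 1 - 1 / real M) \<and>
     NS_error M A B W Z = (\<Sum>x\<in>A. \<Sum>y\<in>B. W x y * T x y)"
proof -
  note Zd = Z[unfolded is_NS_code_def]
  have nn: "0 \<le> Z x v y w" if "x \<in> A" "v < M" "y \<in> B" "w < M" for x v y w using Zd that by blast
  have norm: "(\<Sum>x\<in>A. \<Sum>v<M. Z x v y w) = 1" if "y \<in> B" "w < M" for y w using Zd that by blast
  have nsw: "(\<Sum>x\<in>A. Z x v y w) = (\<Sum>x\<in>A. Z x v y w')" if "v < M" "y \<in> B" "w < M" "w' < M" for v y w w'
    using Zd that by blast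
  have nsy: "(\<Sum>v<M. Z x v y w) = (\<Sum>v<M. Z x v y' w)" if "x \<in> A" "w < M" "y \<in> B" "y' \<in> B" for x w y y'
    using Zd that by blast
  define P where "P x = (1 / real M) * (\<Sum>w<M. \<Sum>v<M. Z x v y0 w)" for x
  define S where "S x y = (1 / real M) * (\<Sum>w<M. Z x w y w)" for x y
  define T where "T x y = P x - S x y" for x y
  have Mpos: "real M > 0" using M by simp
  have P0: "\<forall>x\<in>A. 0 \<le> P x" unfolding P_def using nn y0 by (intro ballI mult_nonneg_nonneg sum_nonneg) auto
  have P1: "sum P A = 1"
  proof -
    have "sum P A = (1 / real M) * (\<Sum>x\<in>A. \<Sum>w<M. \<Sum>v<M. Z x v y0 w)"
      unfolding P_def by (simp add: sum_divide_distrib)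
    also have "(\<Sum>x\<in>A. \<Sum>w<M. \<Sum>v<M. Z x v y0 w) = (\<Sum>w<M. \<Sum>x\<in>A. \<Sum>v<M. Z x v y0 w)"
      by (rule sum.swap)
    also have "\<dots> = (\<Sum>w<M. 1)" using norm[OF y0] by (intro sum.cong) auto
    finally show ?thesis using Mpos by simp
  qed
  have Py: "P x = (1 / real M) * (\<Sum>w<M. \<Sum>v<M. Z x v y w)" if "x \<in> A" "y \<in> B" for x y
    unfolding P_def using nsy[OF that(1) _ y0 that(2)] by simp
  have T: "\<forall>x\<in>A. \<forall>y\<in>B. 0 \<le> T x y \<and> T x y \<le> P x"
  proof (intro ballI conjI)
    fix x y assume x: "x \<in> A" and y: "y \<in> B"
    have "S x y \<le> P x"
    proof -
      have "(\<Sum>w<M. Z x w y w) \<le> (\<Sum>w<M. \<Sum>v<M. Z x v y w)"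
      proof (rule sum_mono)
        fix w assume w: "w \<in> {..<M}"
        show "Z x w y w \<le> (\<Sum>v<M. Z x v y w)"
          using member_le_sum[of w "{..<M}" "\<lambda>v. Z x v y w"] nn x y w by auto
      qed
      then show ?thesis unfolding S_def Py[OF x y] using Mpos by (simp add: divide_right_mono)
    qed
    then show "0 \<le> T x y" unfolding T_def by simp
    show "T x y \<le> P x" unfolding T_def S_def using nn x y by (auto intro!: sum_nonneg divide_nonneg_nonneg)
  qed
  have Ts: "\<forall>y\<in>B. (\<Sum>x\<in>A. T x y) = 1 - 1 / real M"
  proof
    fix y assume y: "y \<in> B"
    have "(\<Sum>x\<in>A. S x y) = (1 / real M) * (\<Sum>x\<in>A. \<Sum>w<M. Z x w y w)"
      unfolding S_def by (simp add: sum_divide_distrib)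
    also have "(\<Sum>x\<in>A. \<Sum>w<M. Z x w y w) = (\<Sum>w<M. \<Sum>x\<in>A. Z x w y w)" by (rule sum.swap)
    also have "(\<Sum>w<M. \<Sum>x\<in>A. Z x w y w) = (\<Sum>w<M. \<Sum>x\<in>A. Z x w y 0)"
    proof (rule sum.cong[OF refl])
      fix w assume "w \<in> {..<M}"
      then show "(\<Sum>x\<in>A. Z x w y w) = (\<Sum>x\<in>A. Z x w y 0)" using nsw[of w y w 0] y M by simp
    qed
    also have "\<dots> = 1" using norm[OF y, of 0] M by (simp add: sum.swap[of _ A])
    finally have "(\<Sum>x\<in>A. S x y) = 1 / real M" by simp
    then show "(\<Sum>x\<in>A. T x y) = 1 - 1 / real M" unfolding T_def by (simp add: sum_subtractf P1)
  qed
  have "(\<Sum>x\<in>A. \<Sum>y\<in>B. W x y * S x y) = (1 / real M) * (\<Sum>x\<in>A. \<Sum>y\<in>B. \<Sum>w<M. W x y * Z x w y w)"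
    unfolding S_def by (simp add: sum_distrib_left mult_ac)
  also have "(\<Sum>x\<in>A. \<Sum>y\<in>B. \<Sum>w<M. W x y * Z x w y w) = (\<Sum>x\<in>A. \<Sum>w<M. \<Sum>y\<in>B. W x y * Z x w y w)"
    by (rule sum.cong[OF refl], rule sum.swap)
  also have "\<dots> = (\<Sum>w<M. \<Sum>x\<in>A. \<Sum>y\<in>B. W x y * Z x w y w)"
    by (rule sum.swap)
  finally have "NS_error M A B W Z = 1 - (\<Sum>x\<in>A. \<Sum>y\<in>B. W x y * S x y)"
    unfolding NS_error_def by simp
  also have "\<dots> = (\<Sum>x\<in>A. P x * (\<Sum>y\<in>B. W x y)) - (\<Sum>x\<in>A. \<Sum>y\<in>B. W x y * S x y)"
    using W1 P1 by simp
  also have "\<dots> = (\<Sum>x\<in>A. \<Sum>y\<in>B. W x y * T x y)"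
    unfolding T_def by (simp add: algebra_simps sum_subtractf sum_distrib_left)
  finally show ?thesis using P0 P1 T Ts by blast
qed

lemma conv_bound:
  fixes A :: "'a set" and B :: "'b set" and W :: "'a \<Rightarrow> 'b \<Rightarrow> real"
  assumes fA: "finite A" and fB: "finite B"
    and W0: "\<And>x y. 0 \<le> W x y"
    and T: "\<And>x y. x \<in> A \<Longrightarrow> y \<in> B \<Longrightarrow> 0 \<le> T x y \<and> T x y \<le> P x"
    and Tsum: "\<And>y. y \<in> B \<Longrightarrow> (\<Sum>x\<in>A. T x y) = c"
    and Q0: "\<And>y. 0 \<le> Q y" and Q1: "sum Q B = 1"
  shows "(\<Sum>x\<in>A. \<Sum>y\<in>B. W x y * T x y) \<ge>
     exp (- g) * (c - (\<Sum>x\<in>A. \<Sum>y\<in>B. if Q y > exp g * W x y then P x * Q y else 0))"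
proof -
  have "exp (- g) * (c - (\<Sum>x\<in>A. \<Sum>y\<in>B. if Q y > exp g * W x y then P x * Q y else 0))
     \<le> exp (- g) * (\<Sum>x\<in>A. \<Sum>y\<in>B. if Q y > exp g * W x y then 0 else Q y * T x y)"
  proof -
    have "(\<Sum>x\<in>A. \<Sum>y\<in>B. Q y * T x y) = (\<Sum>y\<in>B. Q y * (\<Sum>x\<in>A. T x y))"
      by (simp add: sum.swap[of _ A] sum_distrib_left)
    also have "\<dots> = (\<Sum>y\<in>B. Q y * c)" using Tsum by simp
    also have "\<dots> = c" using Q1 by (simp add: sum_distrib_right[symmetric])
    finally have cq: "c = (\<Sum>x\<in>A. \<Sum>y\<in>B. Q y * T x y)" by simp
    have "(\<Sum>x\<in>A. \<Sum>y\<in>B. Q y * T x y) \<le> (\<Sum>x\<in>A. \<Sum>y\<in>B. (if Q y > exp g * W x y then 0 else Q y * T x y)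
           + (if Q y > exp g * W x y then P x * Q y else 0))"
    proof (intro sum_mono)
      fix x y assume "x \<in> A" "y \<in> B"
      then have "0 \<le> T x y \<and> T x y \<le> P x" using T by blast
      then have "Q y * T x y \<le> Q y * P x" using Q0[of y] by (intro mult_left_mono) auto
      then show "Q y * T x y \<le> (if Q y > exp g * W x y then 0 else Q y * T x y)
           + (if Q y > exp g * W x y then P x * Q y else 0)" by (auto simp: mult.commute)
    qed
    then show ?thesis unfolding cq by (simp add: sum.distrib)
  qed
  also have "\<dots> \<le> (\<Sum>x\<in>A. \<Sum>y\<in>B. W x y * T x y)"
  proof -
    have "(\<Sum>x\<in>A. \<Sum>y\<in>B. if Q y > exp g * W x y then 0 else Q y * T x y)
         \<le> (\<Sum>x\<in>A. \<Sum>y\<in>B. exp g * (W x y * T x y))"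
    proof (intro sum_mono)
      fix x y assume "x \<in> A" "y \<in> B"
      then have t: "0 \<le> T x y" using T by blast
      show "(if Q y > exp g * W x y then 0 else Q y * T x y) \<le> exp g * (W x y * T x y)"
        using t W0[of x y] by (auto simp: mult_right_mono mult.assoc[symmetric] intro: mult_right_mono)
    qed
    also have "\<dots> = exp g * (\<Sum>x\<in>A. \<Sum>y\<in>B. W x y * T x y)" by (simp add: sum_distrib_left)
    finally have "exp (-g) * (\<Sum>x\<in>A. \<Sum>y\<in>B. if Q y > exp g * W x y then 0 else Q y * T x y)
       \<le> exp (-g) * (exp g * (\<Sum>x\<in>A. \<Sum>y\<in>B. W x y * T x y))"
      by (rule mult_left_mono) simp
    then show ?thesis by (simp add: exp_minus field_simps)
  qed
  finally show ?thesis .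
qed



lemma chan_nonneg: "is_channel W \<Longrightarrow> 0 \<le> W x y"
  unfolding is_channel_def is_distr_def by blast

lemma chan_sum: "is_channel W \<Longrightarrow> (\<Sum>y\<in>UNIV. W x y) = 1"
  unfolding is_channel_def is_distr_def by blast

lemma chpow_nonneg: assumes "is_channel W" shows "0 \<le> channel_pow n W xs ys"
  unfolding channel_pow_def using chan_nonneg[OF assms] by (auto intro!: prod_nonneg)

lemma chpow_sum:
  fixes W :: "'x::finite \<Rightarrow> 'y::finite \<Rightarrow> real"
  assumes "is_channel W"
  shows "(\<Sum>ys\<in>words n. channel_pow n W xs ys) = 1"
  unfolding channel_pow_def
  using sum_words_prod[where n=n and f="\<lambda>i b. W (xs!i) b"] chan_sum[OF assms] by simp

lemma pw_pos_iff:
  assumes "\<And>a. 0 \<le> p a"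
  shows "pw p n xs > 0 \<longleftrightarrow> (\<forall>i<n. p (xs!i) > 0)"
proof
  assume "pw p n xs > 0"
  then have "pw p n xs \<noteq> 0" by simp
  then have "\<forall>i<n. p (xs!i) \<noteq> 0" unfolding pw_def by (simp add: prod_zero_iff)
  then show "\<forall>i<n. p (xs!i) > 0" using assms by (simp add: less_le)
qed (auto simp: pw_def intro: prod_pos)

lemma conv_tail:
  fixes W :: "'x::finite \<Rightarrow> 'y::finite \<Rightarrow> real" and Q :: "'y \<Rightarrow> real"
  assumes chan: "is_channel W" and Q0: "\<And>y. 0 \<le> Q y" and Q1: "sum Q UNIV = 1"
    and supp: "\<And>x y. Q y > 0 \<Longrightarrow> W x y > 0"
    and Dle: "\<And>x. (\<Sum>y\<in>UNIV. Q y * ln (Q y / W x y)) \<le> u"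
    and d: "\<delta> > 0" and c: "c > 0"
  shows "\<exists>N. \<forall>n\<ge>N. \<forall>xs\<in>words n.
     (\<Sum>ys\<in>words n. if pw Q n ys > exp (real n * (u + \<delta>)) * channel_pow n W xs ys then pw Q n ys else 0) \<le> c"
proof -
  define h where "h x y = ln (Q y / W x y)" for x y
  define m where "m x = (\<Sum>y\<in>UNIV. Q y * h x y)" for x
  define V where "V = (\<Sum>x\<in>UNIV. \<Sum>y\<in>UNIV. Q y * (h x y - m x)\<^sup>2)"
  have V0: "0 \<le> V" unfolding V_def using Q0 by (intro sum_nonneg mult_nonneg_nonneg) auto
  have Vx: "(\<Sum>y\<in>UNIV. Q y * (h x y - m x)\<^sup>2) \<le> V" for x
    unfolding V_def using Q0 by (intro member_le_sum) (auto intro!: sum_nonneg mult_nonneg_nonneg)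
  obtain N :: nat where N: "real N \<ge> V / (\<delta>\<^sup>2 * c) + 1" using real_arch_simple by blast
  show ?thesis
  proof (intro exI allI impI ballI)
    fix n and xs :: "'x list" assume n: "N \<le> n" and xs: "xs \<in> words n"
    have "0 \<le> V / (\<delta>\<^sup>2 * c)" using V0 d c by simp
    then have "real N \<ge> 1" using N by linarith
    then have npos: "real n > 0" using n by linarith
    define dd where "dd i y = h (xs!i) y - m (xs!i)" for i y
    have dd0: "(\<Sum>y\<in>UNIV. Q y * dd i y) = 0" for i
    proof -
      have "(\<Sum>y\<in>UNIV. Q y * dd i y) = (\<Sum>y\<in>UNIV. Q y * h (xs!i) y) - (\<Sum>y\<in>UNIV. Q y) * m (xs!i)"
        unfolding dd_def by (simp add: right_diff_distrib sum_subtractf sum_distrib_right)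
      then show ?thesis by (simp add: Q1 m_def)
    qed
    define t where "t = real n * \<delta>"
    have t: "t > 0" unfolding t_def using npos d by simp
    have step: "(if pw Q n ys > exp (real n * (u + \<delta>)) * channel_pow n W xs ys then pw Q n ys else 0)
          \<le> (if t \<le> (\<Sum>i<n. dd i (ys!i)) then pw Q n ys else 0)" if ys: "ys \<in> words n" for ys
    proof (cases "pw Q n ys > exp (real n * (u + \<delta>)) * channel_pow n W xs ys")
      case True
      have cp0: "0 \<le> channel_pow n W xs ys" by (rule chpow_nonneg[OF chan])
      have "0 \<le> exp (real n * (u + \<delta>)) * channel_pow n W xs ys" using cp0 by simp
      then have pp: "pw Q n ys > 0" using True by linarith
      have Qp: "\<forall>i<n. Q (ys!i) > 0" using pp pw_pos_iff[OF Q0, where n=n and xs=ys] by simp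
      have Wp: "\<forall>i<n. W (xs!i) (ys!i) > 0" using supp Qp by simp
      have lnQ: "ln (pw Q n ys) = (\<Sum>i<n. ln (Q (ys!i)))"
        unfolding pw_def using Qp by (subst ln_prod) auto
      have lnW: "ln (channel_pow n W xs ys) = (\<Sum>i<n. ln (W (xs!i) (ys!i)))"
        unfolding channel_pow_def using Wp by (subst ln_prod) auto
      have cpp: "channel_pow n W xs ys > 0" unfolding channel_pow_def using Wp by (auto intro: prod_pos)
      have "ln (exp (real n * (u + \<delta>)) * channel_pow n W xs ys) < ln (pw Q n ys)"
        using True cpp pp by (subst ln_less_cancel_iff) auto
      then have "real n * (u + \<delta>) + ln (channel_pow n W xs ys) < ln (pw Q n ys)"
        using cpp by (simp add: ln_mult)
      then have "real n * (u + \<delta>) < (\<Sum>i<n. h (xs!i) (ys!i))"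
        unfolding h_def lnQ lnW using Qp Wp by (simp add: ln_divide_pos sum_subtractf)
      moreover have "(\<Sum>i<n. m (xs!i)) \<le> real n * u"
      proof -
        have "(\<Sum>i<n. m (xs!i)) \<le> (\<Sum>i<n. u)" using Dle unfolding m_def h_def by (intro sum_mono) auto
        then show ?thesis by simp
      qed
      ultimately have "t \<le> (\<Sum>i<n. dd i (ys!i))" unfolding dd_def t_def
        by (simp add: sum_subtractf algebra_simps)
      then show ?thesis using True by simp
    next
      case False then show ?thesis using pw_nonneg[of Q, OF Q0] by simp
    qed
    have "(\<Sum>ys\<in>words n. if pw Q n ys > exp (real n * (u + \<delta>)) * channel_pow n W xs ys then pw Q n ys else 0)
        \<le> (\<Sum>ys\<in>words n. if t \<le> (\<Sum>i<n. dd i (ys!i)) then pw Q n ys else 0)"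
      using step by (intro sum_mono) auto
    also have "\<dots> \<le> (\<Sum>ys\<in>words n. pw Q n ys * (\<Sum>i<n. dd i (ys!i))\<^sup>2) / t\<^sup>2"
      by (rule cheb) (auto simp: t pw_nonneg[of Q, OF Q0])
    also have "(\<Sum>ys\<in>words n. pw Q n ys * (\<Sum>i<n. dd i (ys!i))\<^sup>2) = (\<Sum>i<n. \<Sum>y\<in>UNIV. Q y * (dd i y)\<^sup>2)"
      by (rule sum_words_var[OF Q1 dd0])
    also have "\<dots> \<le> (\<Sum>i<n. V)" unfolding dd_def using Vx by (intro sum_mono) auto
    also have "(\<Sum>i<n. V) / t\<^sup>2 = V / (real n * \<delta>\<^sup>2)" unfolding t_def using npos
      by (simp add: power2_eq_square field_simps)
    also have "\<dots> \<le> c"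
    proof -
      have "V / (\<delta>\<^sup>2 * c) \<le> real n" using N n by (smt (verit) of_nat_le_iff)
      then have "V \<le> real n * (\<delta>\<^sup>2 * c)" using d c by (simp add: divide_le_eq mult_ac)
      then show ?thesis using npos d c by (simp add: divide_le_eq mult_ac)
    qed
    finally show "(\<Sum>ys\<in>words n. if pw Q n ys > exp (real n * (u + \<delta>)) * channel_pow n W xs ys then pw Q n ys else 0) \<le> c"
      using t by (simp add: divide_right_mono)
  qed
qed



lemma words_ne: "words n \<noteq> {}"
  unfolding words_def by (auto intro!: exI[of _ "replicate n undefined"])

lemma code_exists:
  fixes A :: "'a set" and B :: "'b set" and W :: "'a \<Rightarrow> 'b \<Rightarrow> real"
  assumes M: "M \<ge> 2" and fA: "finite A" and fB: "finite B" and Ane: "A \<noteq> {}"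
    and W1: "\<And>x. x \<in> A \<Longrightarrow> (\<Sum>y\<in>B. W x y) = 1"
  shows "\<exists>Z. is_NS_code M A B Z"
proof -
  define P where "P x = 1 / real (card A)" for x :: 'a
  have cA: "card A > 0" using fA Ane by (simp add: card_gt_0_iff)
  have "\<exists>Z. is_NS_code M A B Z \<and> NS_error M A B W Z = (\<Sum>x\<in>A. \<Sum>y\<in>B. W x y * (P x * (1 - 1 / real M)))"
  proof (rule NS_construct[OF M fA fB])
    show "\<And>x. x \<in> A \<Longrightarrow> 0 \<le> P x" unfolding P_def by simp
    show "sum P A = 1" unfolding P_def using cA by simp
    show "\<And>x y. x \<in> A \<Longrightarrow> y \<in> B \<Longrightarrow> 0 \<le> P x * (1 - 1 / real M) \<and> P x * (1 - 1 / real M) \<le> P x"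
    proof -
      have a: "0 \<le> 1 - 1 / real M" "1 - 1 / real M \<le> 1" using M by auto
      show "\<And>x y. x \<in> A \<Longrightarrow> y \<in> B \<Longrightarrow> 0 \<le> P x * (1 - 1 / real M) \<and> P x * (1 - 1 / real M) \<le> P x"
        unfolding P_def using a by (auto intro!: divide_right_mono)
    qed
    show "\<And>y. y \<in> B \<Longrightarrow> (\<Sum>x\<in>A. P x * (1 - 1 / real M)) = 1 - 1 / real M"
      unfolding P_def using cA by (simp add: sum_distrib_right[symmetric])
  qed (use W1 in auto)
  then show ?thesis by blast
qed

lemma NS_error_nonneg:
  fixes A :: "'a set" and B :: "'b set" and W :: "'a \<Rightarrow> 'b \<Rightarrow> real"
  assumes M: "M \<ge> 1" and fA: "finite A" and fB: "finite B" and Bne: "B \<noteq> {}"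
    and Z: "is_NS_code M A B Z" and W0: "\<And>x y. 0 \<le> W x y"
    and W1: "\<And>x. x \<in> A \<Longrightarrow> (\<Sum>y\<in>B. W x y) = 1"
  shows "0 \<le> NS_error M A B W Z"
proof -
  obtain y0 where y0: "y0 \<in> B" using Bne by blast
  obtain P T where H: "(\<forall>x\<in>A. 0 \<le> P x) \<and> sum P A = 1 \<and>
     (\<forall>x\<in>A. \<forall>y\<in>B. 0 \<le> T x y \<and> T x y \<le> P x) \<and>
     (\<forall>y\<in>B. (\<Sum>x\<in>A. T x y) = 1 - 1 / real M) \<and>
     NS_error M A B W Z = (\<Sum>x\<in>A. \<Sum>y\<in>B. W x y * T x y)"
  proof -
    have "\<exists>P T. (\<forall>x\<in>A. 0 \<le> P x) \<and> sum P A = 1 \<and>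
     (\<forall>x\<in>A. \<forall>y\<in>B. 0 \<le> T x y \<and> T x y \<le> P x) \<and>
     (\<forall>y\<in>B. (\<Sum>x\<in>A. T x y) = 1 - 1 / real M) \<and>
     NS_error M A B W Z = (\<Sum>x\<in>A. \<Sum>y\<in>B. W x y * T x y)"
      by (rule NS_extract[OF M fA fB y0 Z]) (rule W1)
    then show ?thesis by (elim exE) (rule that)
  qed
  have T: "\<forall>x\<in>A. \<forall>y\<in>B. 0 \<le> T x y \<and> T x y \<le> P x" and e: "NS_error M A B W Z = (\<Sum>x\<in>A. \<Sum>y\<in>B. W x y * T x y)"
    using H by simp_all
  show ?thesis unfolding e using T W0 by (intro sum_nonneg mult_nonneg_nonneg) auto
qed

lemma eps_le:
  fixes A :: "'a set" and B :: "'b set" and W :: "'a \<Rightarrow> 'b \<Rightarrow> real"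
  assumes M: "M \<ge> 1" and fA: "finite A" and fB: "finite B" and Bne: "B \<noteq> {}"
    and Z: "is_NS_code M A B Z" and W0: "\<And>x y. 0 \<le> W x y"
    and W1: "\<And>x. x \<in> A \<Longrightarrow> (\<Sum>y\<in>B. W x y) = 1"
  shows "eps_NS M A B W \<le> NS_error M A B W Z"
  unfolding eps_NS_def
proof (rule cInf_lower)
  show "NS_error M A B W Z \<in> {NS_error M A B W Z |Z. is_NS_code M A B Z}" using Z by blast
  show "bdd_below {NS_error M A B W Z |Z. is_NS_code M A B Z}"
    by (rule bdd_belowI[of _ 0]) (auto intro: NS_error_nonneg[OF M fA fB Bne _ W0 W1])
qed

lemma eps_ge:
  fixes A :: "'a set" and B :: "'b set" and W :: "'a \<Rightarrow> 'b \<Rightarrow> real"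
  assumes ex: "\<exists>Z. is_NS_code M A B Z"
    and b: "\<And>Z. is_NS_code M A B Z \<Longrightarrow> b \<le> NS_error M A B W Z"
  shows "b \<le> eps_NS M A B W"
  unfolding eps_NS_def
  by (rule cInf_greatest) (use ex b in auto)

lemma W_le_exp_l:
  fixes L w :: real
  assumes "0 \<le> w"
  shows "w \<le> exp (if w = 0 then - L else max (ln w) (- L))"
proof (cases "w = 0")
  case True then show ?thesis using exp_ge_zero[of "-L"] by simp
next
  case False
  then have "w = exp (ln w)" using assms by simp
  also have "\<dots> \<le> exp (max (ln w) (- L))" by simp
  finally show ?thesis using False by simp
qed

lemma ach:
  fixes W :: "'x::finite \<Rightarrow> 'y::finite \<Rightarrow> real" and P :: "'x \<Rightarrow> real" and L :: real
  assumes chan: "is_channel W" and P0: "\<And>x. 0 \<le> P x" and P1: "sum P UNIV = 1"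
    and M: "M \<ge> 2" and d: "\<delta> > 0"
  defines "l x y \<equiv> (if W x y = 0 then - L else max (ln (W x y)) (- L))"
  defines "\<mu> y \<equiv> (\<Sum>x\<in>UNIV. P x * l x y)"
  shows "\<exists>N. \<forall>n\<ge>N. eps_NS M (words n) (words n) (channel_pow n W)
                      \<le> exp (real n * \<delta>) * (\<Sum>y\<in>UNIV. exp (\<mu> y)) ^ n"
proof -
  define V where "V = (\<Sum>y\<in>UNIV. \<Sum>x\<in>UNIV. P x * (l x y - \<mu> y)\<^sup>2)"
  have V0: "0 \<le> V" unfolding V_def using P0 by (intro sum_nonneg mult_nonneg_nonneg) auto
  have Vy: "(\<Sum>x\<in>UNIV. P x * (l x y - \<mu> y)\<^sup>2) \<le> V" for y
    unfolding V_def using P0 by (intro member_le_sum) (auto intro!: sum_nonneg mult_nonneg_nonneg)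
  have Mr: "real M \<ge> 2" using M by simp
  obtain N :: nat where N: "real N \<ge> V * real M / \<delta>\<^sup>2 + 1" using real_arch_simple by blast
  show ?thesis
  proof (intro exI allI impI)
    fix n assume n: "N \<le> n"
    have "0 \<le> V * real M / \<delta>\<^sup>2" using V0 by simp
    then have "real N \<ge> 1" using N by linarith
    then have npos: "real n > 0" using n by linarith
    define A where "A = (words n :: 'x list set)"
    define B where "B = (words n :: 'y list set)"
    define Wn where "Wn = channel_pow n W"
    define \<tau> where "\<tau> ys = exp ((\<Sum>i<n. \<mu> (ys!i)) + real n * \<delta>)" for ys
    define hi where "hi ys = (\<Sum>xs\<in>A. if Wn xs ys > \<tau> ys then pw P n xs else 0)" for ys
    define lo where "lo ys = (\<Sum>xs\<in>A. if Wn xs ys \<le> \<tau> ys then pw P n xs else 0)" for ys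
    define T where "T xs ys = (if Wn xs ys \<le> \<tau> ys then pw P n xs * ((1 - 1 / real M) / lo ys) else 0)" for xs ys
    have pwA: "sum (pw P n) A = 1" unfolding A_def by (rule sum_pw[OF P1])
    have hilo: "hi ys + lo ys = 1" for ys
      unfolding hi_def lo_def using pwA by (simp add: sum.distrib[symmetric] if_distrib cong: if_cong)
    have hi_le: "hi ys \<le> 1 / real M" if ys: "ys \<in> B" for ys
    proof -
      define dd where "dd i x = l x (ys!i) - \<mu> (ys!i)" for i x
      define t where "t = real n * \<delta>"
      have t: "t > 0" unfolding t_def using npos d by simp
      have dd0: "(\<Sum>x\<in>UNIV. P x * dd i x) = 0" for i
      proof -
        have "(\<Sum>x\<in>UNIV. P x * dd i x) = (\<Sum>x\<in>UNIV. P x * l x (ys!i)) - (\<Sum>x\<in>UNIV. P x) * \<mu> (ys!i)"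
          unfolding dd_def by (simp add: right_diff_distrib sum_subtractf sum_distrib_right)
        then show ?thesis by (simp add: P1 \<mu>_def)
      qed
      have step: "(if Wn xs ys > \<tau> ys then pw P n xs else 0) \<le> (if t \<le> (\<Sum>i<n. dd i (xs!i)) then pw P n xs else 0)"
        for xs
      proof (cases "Wn xs ys > \<tau> ys")
        case True
        have "Wn xs ys \<le> (\<Prod>i<n. exp (l (xs!i) (ys!i)))"
          unfolding Wn_def channel_pow_def l_def
          by (intro prod_mono conjI W_le_exp_l chan_nonneg[OF chan])
        also have "\<dots> = exp (\<Sum>i<n. l (xs!i) (ys!i))" by (simp add: exp_sum)
        finally have "exp ((\<Sum>i<n. \<mu> (ys!i)) + real n * \<delta>) < exp (\<Sum>i<n. l (xs!i) (ys!i))"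
          using True unfolding \<tau>_def by linarith
        then have "(\<Sum>i<n. \<mu> (ys!i)) + real n * \<delta> < (\<Sum>i<n. l (xs!i) (ys!i))" by simp
        then have "t \<le> (\<Sum>i<n. dd i (xs!i))" unfolding dd_def t_def by (simp add: sum_subtractf)
        then show ?thesis using True by simp
      next
        case False then show ?thesis using pw_nonneg[of P, OF P0] by simp
      qed
      have "hi ys \<le> (\<Sum>xs\<in>A. if t \<le> (\<Sum>i<n. dd i (xs!i)) then pw P n xs else 0)"
        unfolding hi_def using step by (intro sum_mono) auto
      also have "\<dots> \<le> (\<Sum>xs\<in>A. pw P n xs * (\<Sum>i<n. dd i (xs!i))\<^sup>2) / t\<^sup>2"
        unfolding A_def by (rule cheb) (auto simp: t pw_nonneg[of P, OF P0])
      also have "(\<Sum>xs\<in>A. pw P n xs * (\<Sum>i<n. dd i (xs!i))\<^sup>2) = (\<Sum>i<n. \<Sum>x\<in>UNIV. P x * (dd i x)\<^sup>2)"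
        unfolding A_def by (rule sum_words_var[OF P1 dd0])
      also have "\<dots> \<le> (\<Sum>i<n. V)" unfolding dd_def using Vy by (intro sum_mono) auto
      also have "(\<Sum>i<n. V) / t\<^sup>2 = V / (real n * \<delta>\<^sup>2)" unfolding t_def using npos
        by (simp add: power2_eq_square field_simps)
      also have "\<dots> \<le> 1 / real M"
      proof -
        have "V * real M / \<delta>\<^sup>2 \<le> real n" using N n by (smt (verit) of_nat_le_iff)
        then have "V * real M \<le> real n * \<delta>\<^sup>2" using d by (simp add: divide_le_eq)
        then show ?thesis using npos d Mr by (simp add: divide_le_eq field_simps)
      qed
      finally show ?thesis using t by (simp add: divide_right_mono)
    qed
    have lo_pos: "lo ys \<ge> 1 - 1 / real M" if "ys \<in> B" for ys
      using hi_le[OF that] hilo[of ys] by linarith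
    have cM: "0 < 1 - 1 / real M" using Mr by (simp add: field_simps)
    have Tprop: "0 \<le> T xs ys \<and> T xs ys \<le> pw P n xs" if "ys \<in> B" for xs ys
    proof -
      have lp: "lo ys > 0" using lo_pos[OF that] cM by linarith
      have r: "0 \<le> (1 - 1 / real M) / lo ys \<and> (1 - 1 / real M) / lo ys \<le> 1"
        using lp lo_pos[OF that] cM by (simp add: divide_le_eq)
      have pp: "0 \<le> pw P n xs" by (rule pw_nonneg[of P, OF P0])
      have "0 \<le> pw P n xs * ((1 - 1 / real M) / lo ys)" using r pp by (intro mult_nonneg_nonneg) auto
      moreover have "pw P n xs * ((1 - 1 / real M) / lo ys) \<le> pw P n xs"
        using mult_left_mono[of "(1 - 1 / real M) / lo ys" 1 "pw P n xs"] r pp by simp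
      ultimately show ?thesis unfolding T_def using pp by (simp only: if_split) simp
    qed
    have Tsum: "(\<Sum>xs\<in>A. T xs ys) = 1 - 1 / real M" if "ys \<in> B" for ys
    proof -
      have lp: "lo ys > 0" using lo_pos[OF that] cM by linarith
      have "(\<Sum>xs\<in>A. T xs ys) = (\<Sum>xs\<in>A. (if Wn xs ys \<le> \<tau> ys then pw P n xs else 0) * ((1 - 1 / real M) / lo ys))"
        unfolding T_def by (intro sum.cong) auto
      also have "\<dots> = lo ys * ((1 - 1 / real M) / lo ys)"
        by (simp only: sum_distrib_right[symmetric] lo_def)
      finally have "(\<Sum>xs\<in>A. T xs ys) = lo ys * ((1 - 1 / real M) / lo ys)" .
      then show ?thesis using lp by simp
    qed
    have W1: "(\<Sum>ys\<in>B. Wn xs ys) = 1" for xs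
      unfolding B_def Wn_def by (rule chpow_sum[OF chan])
    obtain Z where Z: "is_NS_code M A B Z" and err: "NS_error M A B Wn Z = (\<Sum>xs\<in>A. \<Sum>ys\<in>B. Wn xs ys * T xs ys)"
      using NS_construct[OF M _ _ _ pwA, of B T Wn] Tprop Tsum W1 pw_nonneg[of P, OF P0]
      unfolding A_def B_def by auto
    have "eps_NS M A B Wn \<le> NS_error M A B Wn Z"
      by (rule eps_le) (use M Z W1 chpow_nonneg[OF chan] in \<open>auto simp: A_def B_def Wn_def words_ne\<close>)
    also have "\<dots> = (\<Sum>ys\<in>B. \<Sum>xs\<in>A. Wn xs ys * T xs ys)" unfolding err by (rule sum.swap)
    also have "\<dots> \<le> (\<Sum>ys\<in>B. \<Sum>xs\<in>A. \<tau> ys * T xs ys)"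
    proof (intro sum_mono)
      fix ys xs assume ys: "ys \<in> B" and "xs \<in> A"
      show "Wn xs ys * T xs ys \<le> \<tau> ys * T xs ys"
      proof (cases "Wn xs ys \<le> \<tau> ys")
        case True
        then show ?thesis using Tprop[OF ys, of xs] by (intro mult_right_mono) auto
      next
        case False then show ?thesis by (simp add: T_def)
      qed
    qed
    also have "\<dots> = (\<Sum>ys\<in>B. \<tau> ys * (1 - 1 / real M))"
      by (intro sum.cong refl) (simp add: sum_distrib_left[symmetric] Tsum)
    also have "\<dots> \<le> (\<Sum>ys\<in>B. \<tau> ys)"
      using cM by (intro sum_mono) (simp add: \<tau>_def)
    also have "(\<Sum>ys\<in>B. \<tau> ys) = exp (real n * \<delta>) * (\<Sum>ys\<in>B. \<Prod>i<n. exp (\<mu> (ys!i)))"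
      unfolding \<tau>_def by (simp add: exp_add exp_sum sum_distrib_left mult.commute)
    also have "(\<Sum>ys\<in>B. \<Prod>i<n. exp (\<mu> (ys!i))) = (\<Sum>y\<in>UNIV. exp (\<mu> y)) ^ n"
      unfolding B_def using sum_words_prod[where n=n and f="\<lambda>i y. exp (\<mu> y)"] by simp
    finally show "eps_NS M (words n) (words n) (channel_pow n W) \<le> exp (real n * \<delta>) * (\<Sum>y\<in>UNIV. exp (\<mu> y)) ^ n"
      unfolding A_def B_def Wn_def .
  qed
qed



definition gP :: "('x::finite \<Rightarrow> 'y::finite \<Rightarrow> real) \<Rightarrow> ('x \<Rightarrow> real) \<Rightarrow> 'y \<Rightarrow> real" where
  "gP W P y = (if \<forall>x. 0 < P x \<longrightarrow> 0 < W x y then exp (\<Sum>x\<in>UNIV. P x * ln (W x y)) else 0)"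

definition Zf :: "('x::finite \<Rightarrow> 'y::finite \<Rightarrow> real) \<Rightarrow> ('x \<Rightarrow> real) \<Rightarrow> real" where
  "Zf W P = (\<Sum>y\<in>UNIV. gP W P y)"

definition Fv :: "('x::finite \<Rightarrow> 'y::finite \<Rightarrow> real) \<Rightarrow> ('x \<Rightarrow> real) \<Rightarrow> ereal" where
  "Fv W P = (if Zf W P = 0 then \<infinity> else ereal (- ln (Zf W P)))"

lemma gP_nonneg: "0 \<le> gP W P y" unfolding gP_def by simp

lemma Zf_nonneg: "0 \<le> Zf W P" unfolding Zf_def by (intro sum_nonneg gP_nonneg)

lemma sum_UNIV_pair:
  fixes f :: "'a::finite \<times> 'b::finite \<Rightarrow> real"
  shows "(\<Sum>a\<in>UNIV. f a) = (\<Sum>x\<in>UNIV. \<Sum>y\<in>UNIV. f (x, y))"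
  by (simp add: UNIV_Times_UNIV[symmetric] sum.cartesian_product del: UNIV_Times_UNIV)

lemma KL_formula:
  fixes W :: "'x::finite \<Rightarrow> 'y::finite \<Rightarrow> real"
  assumes pos: "\<And>x y. P x > 0 \<Longrightarrow> Q y > 0 \<Longrightarrow> W x y > 0"
    and P0: "\<And>x. 0 \<le> P x" and Q0: "\<And>y. 0 \<le> Q y"
  shows "KL_div (\<lambda>(x, y). P x * Q y) (\<lambda>(x, y). P x * W x y)
     = ereal (\<Sum>x\<in>UNIV. \<Sum>y\<in>UNIV. P x * Q y * (ln (Q y) - ln (W x y)))"
proof -
  have nex: "\<not> (\<exists>a. (\<lambda>(x, y). P x * Q y) a > 0 \<and> (\<lambda>(x, y). P x * W x y) a = 0)"
  proof
    assume "\<exists>a. (\<lambda>(x, y). P x * Q y) a > 0 \<and> (\<lambda>(x, y). P x * W x y) a = 0"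
    then obtain x y where a: "P x * Q y > 0" "P x * W x y = 0" by auto
    then have px: "P x > 0" and qy: "Q y > 0" using P0[of x] Q0[of y] by (auto simp: zero_less_mult_iff)
    then have "W x y > 0" using pos by blast
    then show False using a(2) px by simp
  qed
  have "(\<Sum>a\<in>{a. (\<lambda>(x, y). P x * Q y) a > 0}. (\<lambda>(x, y). P x * Q y) a *
          ln ((\<lambda>(x, y). P x * Q y) a / (\<lambda>(x, y). P x * W x y) a))
      = (\<Sum>a\<in>UNIV. (\<lambda>(x, y). P x * Q y * (ln (Q y) - ln (W x y))) a)"
  proof (rule sum.mono_neutral_cong_left)
    show "\<forall>i\<in>UNIV - {a. (\<lambda>(x, y). P x * Q y) a > 0}. (\<lambda>(x, y). P x * Q y * (ln (Q y) - ln (W x y))) i = 0"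
    proof
      fix a assume "a \<in> UNIV - {a. (\<lambda>(x, y). P x * Q y) a > 0}"
      then have "P (fst a) * Q (snd a) = 0" using P0[of "fst a"] Q0[of "snd a"]
        by (cases a) (auto simp: less_le)
      then show "(\<lambda>(x, y). P x * Q y * (ln (Q y) - ln (W x y))) a = 0" by (cases a) auto
    qed
    show "\<And>a. a \<in> {a. (\<lambda>(x, y). P x * Q y) a > 0} \<Longrightarrow>
       (\<lambda>(x, y). P x * Q y) a * ln ((\<lambda>(x, y). P x * Q y) a / (\<lambda>(x, y). P x * W x y) a)
       = (\<lambda>(x, y). P x * Q y * (ln (Q y) - ln (W x y))) a"
    proof -
      fix a assume "a \<in> {a. (\<lambda>(x, y). P x * Q y) a > 0}"
      then obtain x y where a: "a = (x, y)" "P x * Q y > 0" by (cases a) auto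
      then have px: "P x > 0" and qy: "Q y > 0" using P0[of x] Q0[of y] by (auto simp: zero_less_mult_iff)
      then have w: "W x y > 0" using pos by simp
      have "P x * Q y / (P x * W x y) = Q y / W x y" using px by simp
      then show "(\<lambda>(x, y). P x * Q y) a * ln ((\<lambda>(x, y). P x * Q y) a / (\<lambda>(x, y). P x * W x y) a)
       = (\<lambda>(x, y). P x * Q y * (ln (Q y) - ln (W x y))) a"
        using a qy w by (simp add: ln_divide_pos)
    qed
  qed auto
  also have "\<dots> = (\<Sum>x\<in>UNIV. \<Sum>y\<in>UNIV. P x * Q y * (ln (Q y) - ln (W x y)))"
    by (subst sum_UNIV_pair) simp
  finally show ?thesis unfolding KL_div_def using nex by simp
qed

lemma KL_lower:
  fixes W :: "'x::finite \<Rightarrow> 'y::finite \<Rightarrow> real"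
  assumes chan: "is_channel W" and P: "is_distr P" and Q: "is_distr Q"
  shows "Fv W P \<le> KL_div (\<lambda>(x, y). P x * Q y) (\<lambda>(x, y). P x * W x y)"
proof (cases "\<exists>x y. P x > 0 \<and> Q y > 0 \<and> W x y = 0")
  case True
  then obtain x y where "P x > 0" "Q y > 0" "W x y = 0" by blast
  then have "KL_div (\<lambda>(x, y). P x * Q y) (\<lambda>(x, y). P x * W x y) = \<infinity>"
    unfolding KL_div_def by (intro if_P exI[of _ "(x, y)"]) simp
  then show ?thesis by simp
next
  case False
  have P0: "\<And>x. 0 \<le> P x" and P1: "sum P UNIV = 1" using P unfolding is_distr_def by auto
  have Q0: "\<And>y. 0 \<le> Q y" and Q1: "sum Q UNIV = 1" using Q unfolding is_distr_def by auto
  have W0: "\<And>x y. 0 \<le> W x y" using chan_nonneg[OF chan] .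
  have pos: "\<And>x y. P x > 0 \<Longrightarrow> Q y > 0 \<Longrightarrow> W x y > 0"
    using False W0 by (metis less_eq_real_def)
  define g where "g = gP W P"
  define Z where "Z = Zf W P"
  have gpos: "g y > 0" and lng: "ln (g y) = (\<Sum>x\<in>UNIV. P x * ln (W x y))" if "Q y > 0" for y
    using pos[OF _ that] unfolding g_def gP_def by auto
  have KL: "KL_div (\<lambda>(x, y). P x * Q y) (\<lambda>(x, y). P x * W x y)
     = ereal (\<Sum>y\<in>UNIV. Q y * (ln (Q y) - ln (g y)))"
  proof -
    have "(\<Sum>x\<in>UNIV. \<Sum>y\<in>UNIV. P x * Q y * (ln (Q y) - ln (W x y)))
        = (\<Sum>y\<in>UNIV. \<Sum>x\<in>UNIV. P x * Q y * (ln (Q y) - ln (W x y)))" by (rule sum.swap)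
    also have "\<dots> = (\<Sum>y\<in>UNIV. Q y * (ln (Q y) - ln (g y)))"
    proof (rule sum.cong[OF refl])
      fix y
      show "(\<Sum>x\<in>UNIV. P x * Q y * (ln (Q y) - ln (W x y))) = Q y * (ln (Q y) - ln (g y))"
      proof (cases "Q y > 0")
        case True
        have "(\<Sum>x\<in>UNIV. P x * Q y * (ln (Q y) - ln (W x y)))
            = Q y * (sum P UNIV * ln (Q y) - (\<Sum>x\<in>UNIV. P x * ln (W x y)))"
          by (simp add: algebra_simps sum_subtractf sum_distrib_left sum_distrib_right)
        then show ?thesis using lng[OF True] P1 by simp
      next
        case False then have "Q y = 0" using Q0[of y] by simp
        then show ?thesis by simp
      qed
    qed
    finally show ?thesis using KL_formula[where P=P and Q=Q and W=W, OF pos P0 Q0] by simp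
  qed
  obtain y0 where "Q y0 > 0"
  proof -
    have "\<exists>y. Q y > 0"
    proof (rule ccontr)
      assume "\<not> (\<exists>y. Q y > 0)"
      then have "\<And>y. Q y = 0" using Q0 by (metis less_eq_real_def)
      then show False using Q1 by simp
    qed
    then show ?thesis using that by blast
  qed
  then have "g y0 > 0" by (rule gpos)
  moreover have "g y0 \<le> Z" unfolding Z_def Zf_def g_def by (rule member_le_sum) (auto simp: gP_nonneg)
  ultimately have Zpos: "Z > 0" by linarith
  have gibbs: "Q y * (ln (g y) - ln (Q y) - ln Z) \<le> g y / Z - Q y" for y
  proof (cases "Q y > 0")
    case True
    have "ln (g y) - ln (Q y) - ln Z = ln (g y / (Q y * Z))"
      using gpos[OF True] True Zpos by (simp add: ln_div ln_mult)
    also have "\<dots> \<le> g y / (Q y * Z) - 1" using gpos[OF True] True Zpos by (intro ln_le_minus_one) simp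
    finally have "Q y * (ln (g y) - ln (Q y) - ln Z) \<le> Q y * (g y / (Q y * Z) - 1)"
      using True by (simp add: mult_left_mono)
    also have "\<dots> = g y / Z - Q y" using True by (simp add: field_simps)
    finally show ?thesis .
  next
    case False then have "Q y = 0" using Q0[of y] by simp
    then show ?thesis using gP_nonneg[of W P y] Zpos unfolding g_def by simp
  qed
  have "(\<Sum>y\<in>UNIV. Q y * (ln (g y) - ln (Q y) - ln Z)) \<le> (\<Sum>y\<in>UNIV. g y / Z - Q y)"
    by (intro sum_mono gibbs)
  also have "\<dots> = 0" using Zpos Q1 unfolding Z_def Zf_def g_def by (simp add: sum_subtractf sum_divide_distrib[symmetric])
  moreover have "(\<Sum>y\<in>UNIV. Q y * (ln (g y) - ln (Q y) - ln Z))
      = (\<Sum>y\<in>UNIV. Q y * (ln (g y) - ln (Q y))) - (\<Sum>y\<in>UNIV. Q y) * ln Z"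
    by (simp add: right_diff_distrib sum_subtractf sum_distrib_right)
  moreover have "(\<Sum>y\<in>UNIV. Q y * (ln (Q y) - ln (g y))) = - (\<Sum>y\<in>UNIV. Q y * (ln (g y) - ln (Q y)))"
    by (simp add: sum_negf[symmetric] algebra_simps)
  ultimately have "- ln Z \<le> (\<Sum>y\<in>UNIV. Q y * (ln (Q y) - ln (g y)))"
    using Q1 by simp
  then show ?thesis unfolding KL Fv_def using Zpos by (simp add: Z_def)
qed

lemma KL_attained:
  fixes W :: "'x::finite \<Rightarrow> 'y::finite \<Rightarrow> real"
  assumes chan: "is_channel W" and P: "is_distr P" and Zp: "Zf W P > 0"
  defines "Q \<equiv> (\<lambda>y. gP W P y / Zf W P)"
  shows "is_distr Q" and "KL_div (\<lambda>(x, y). P x * Q y) (\<lambda>(x, y). P x * W x y) = Fv W P"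
proof -
  have P0: "\<And>x. 0 \<le> P x" and P1: "sum P UNIV = 1" using P unfolding is_distr_def by auto
  have Q0: "\<And>y. 0 \<le> Q y" unfolding Q_def using gP_nonneg[of W P] Zp by (simp add: less_imp_le divide_nonneg_nonneg)
  have "sum Q UNIV = 1" unfolding Q_def using Zp by (simp add: sum_divide_distrib[symmetric] Zf_def)
  then show "is_distr Q" using Q0 unfolding is_distr_def by simp
  have pos: "W x y > 0" if "P x > 0" "Q y > 0" for x y
  proof -
    have "gP W P y > 0" using that(2) Zp unfolding Q_def by (simp add: zero_less_divide_iff)
    then have "\<forall>x. 0 < P x \<longrightarrow> 0 < W x y" unfolding gP_def by (auto split: if_splits)
    then show ?thesis using that by simp
  qed
  have "(\<Sum>x\<in>UNIV. \<Sum>y\<in>UNIV. P x * Q y * (ln (Q y) - ln (W x y))) = - ln (Zf W P)"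
  proof -
    have "(\<Sum>x\<in>UNIV. \<Sum>y\<in>UNIV. P x * Q y * (ln (Q y) - ln (W x y)))
        = (\<Sum>y\<in>UNIV. \<Sum>x\<in>UNIV. P x * Q y * (ln (Q y) - ln (W x y)))" by (rule sum.swap)
    also have "\<dots> = (\<Sum>y\<in>UNIV. Q y * (- ln (Zf W P)))"
    proof (rule sum.cong[OF refl])
      fix y
      show "(\<Sum>x\<in>UNIV. P x * Q y * (ln (Q y) - ln (W x y))) = Q y * (- ln (Zf W P))"
      proof (cases "Q y > 0")
        case True
        have g: "gP W P y > 0" using True Zp unfolding Q_def by (simp add: zero_less_divide_iff)
        then have c: "\<forall>x. 0 < P x \<longrightarrow> 0 < W x y" unfolding gP_def by (auto split: if_splits)
        have lg: "ln (gP W P y) = (\<Sum>x\<in>UNIV. P x * ln (W x y))" using c unfolding gP_def by simp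
        have lq: "ln (Q y) = ln (gP W P y) - ln (Zf W P)" unfolding Q_def using g Zp by (simp add: ln_div)
        have "(\<Sum>x\<in>UNIV. P x * Q y * (ln (Q y) - ln (W x y)))
            = Q y * (sum P UNIV * ln (Q y) - (\<Sum>x\<in>UNIV. P x * ln (W x y)))"
          by (simp add: algebra_simps sum_subtractf sum_distrib_left sum_distrib_right)
        then show ?thesis using lg lq P1 by simp
      next
        case False then have "Q y = 0" using Q0[of y] by simp
        then show ?thesis by simp
      qed
    qed
    also have "\<dots> = - ln (Zf W P)" using \<open>sum Q UNIV = 1\<close> by (simp add: sum_negf sum_distrib_right[symmetric])
    finally show ?thesis .
  qed
  then show "KL_div (\<lambda>(x, y). P x * Q y) (\<lambda>(x, y). P x * W x y) = Fv W P"
    using KL_formula[where P=P and Q=Q and W=W, OF pos P0 Q0] Zp unfolding Fv_def by simp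
qed

lemma umlaut_eq:
  fixes W :: "'x::finite \<Rightarrow> 'y::finite \<Rightarrow> real"
  assumes chan: "is_channel W"
  shows "umlaut_info W = (SUP P\<in>{P. is_distr P}. Fv W P)"
  unfolding umlaut_info_def
proof (rule SUP_cong[OF refl])
  fix P :: "'x \<Rightarrow> real" assume P: "P \<in> {P. is_distr P}"
  show "(INF Q\<in>{Q. is_distr Q}. KL_div (\<lambda>(x, y). P x * Q y) (\<lambda>(x, y). P x * W x y)) = Fv W P"
  proof (rule antisym)
    show "Fv W P \<le> (INF Q\<in>{Q. is_distr Q}. KL_div (\<lambda>(x, y). P x * Q y) (\<lambda>(x, y). P x * W x y))"
      using KL_lower[OF chan] P by (auto intro!: INF_greatest)
    show "(INF Q\<in>{Q. is_distr Q}. KL_div (\<lambda>(x, y). P x * Q y) (\<lambda>(x, y). P x * W x y)) \<le> Fv W P"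
    proof (cases "Zf W P > 0")
      case True
      show ?thesis using KL_attained[OF chan _ True] P by (intro INF_lower2) auto
    next
      case False then have "Zf W P = 0" using Zf_nonneg[of W P] by simp
      then show ?thesis unfolding Fv_def by simp
    qed
  qed
qed



definition YS :: "('x \<Rightarrow> 'y \<Rightarrow> real) \<Rightarrow> 'x set \<Rightarrow> 'y set" where
  "YS W S = {y. \<forall>x\<in>S. 0 < W x y}"

definition FS :: "('x::finite \<Rightarrow> 'y::finite \<Rightarrow> real) \<Rightarrow> 'x set \<Rightarrow> ('x \<Rightarrow> real) \<Rightarrow> real" where
  "FS W S p = - ln (\<Sum>y\<in>YS W S. exp (\<Sum>x\<in>S. p x * ln (W x y)))"

definition face :: "'x set \<Rightarrow> ('x \<Rightarrow> real) set" where
  "face S = {p. (\<forall>x. 0 \<le> p x) \<and> (\<forall>x. x \<notin> S \<longrightarrow> p x = 0) \<and> sum p UNIV = 1}"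

lemma unif_face:
  fixes S :: "'x::finite set"
  assumes "S \<noteq> {}"
  shows "(\<lambda>x. if x \<in> S then 1 / real (card S) else 0) \<in> face S"
proof -
  have c: "card S > 0" using assms by (simp add: card_gt_0_iff)
  have "(\<Sum>x\<in>UNIV. if x \<in> S then 1 / real (card S) else 0) = (\<Sum>x\<in>S. 1 / real (card S))"
    by (simp add: sum.If_cases)
  also have "\<dots> = 1" using c assms by simp
  finally show ?thesis unfolding face_def by auto
qed

lemma face_max:
  fixes W :: "'x::finite \<Rightarrow> 'y::finite \<Rightarrow> real" and S :: "'x set"
  assumes Sne: "S \<noteq> {}" and Yne: "YS W S \<noteq> {}"
  shows "\<exists>p\<in>face S. \<forall>q\<in>face S. FS W S q \<le> FS W S p"
proof -
  define K where "K = {v::real^'x. (\<lambda>x. v$x) \<in> face S}"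
  have K_eq: "K = {v. \<forall>x. 0 \<le> v$x} \<inter> (\<Inter>x\<in>-S. {v. v$x = 0}) \<inter> {v. (\<Sum>x\<in>UNIV. v$x) = 1}"
    unfolding K_def face_def by auto
  have cl: "closed K" unfolding K_eq
  proof (intro closed_Int closed_INT ballI)
    have "{v::real^'x. \<forall>x. 0 \<le> v$x} = (\<Inter>x. {v. v$x \<ge> 0})" by auto
    then show "closed {v::real^'x. \<forall>x. 0 \<le> v$x}" by (simp add: closed_INT closed_halfspace_component_ge_cart)
    fix x show "closed {v::real^'x. v$x = 0}"
      by (rule closed_Collect_eq) (auto intro!: continuous_intros)
  next
    show "closed {v::real^'x. (\<Sum>x\<in>UNIV. v$x) = 1}"
      by (rule closed_Collect_eq) (auto intro!: continuous_intros)
  qed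
  have bd: "bounded K"
  proof -
    have "K \<subseteq> cball 0 1"
    proof
      fix v assume "v \<in> K"
      then have v0: "\<forall>x. 0 \<le> v$x" and v1: "(\<Sum>x\<in>UNIV. v$x) = 1" unfolding K_def face_def by auto
      have "norm v \<le> (\<Sum>i\<in>UNIV. \<bar>v$i\<bar>)" by (rule norm_le_l1_cart)
      also have "\<dots> = 1" using v0 v1 by simp
      finally show "v \<in> cball 0 1" by simp
    qed
    then show ?thesis using bounded_cball bounded_subset by blast
  qed
  have cpt: "compact K" using cl bd by (simp add: compact_eq_bounded_closed)
  define u where "u = (\<lambda>x. if x \<in> S then 1 / real (card S) else 0)"
  have e: "(\<lambda>x. (\<chi> x. u x)$x) = u" by simp
  have "(\<chi> x. u x) \<in> K" unfolding K_def mem_Collect_eq e unfolding u_def by (rule unif_face[OF Sne])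
  then have Kne: "K \<noteq> {}" by blast
  have pos: "(\<Sum>y\<in>YS W S. exp (\<Sum>x\<in>S. v$x * ln (W x y))) > 0" for v :: "real^'x"
    using Yne by (intro sum_pos) auto
  have cont: "continuous_on K (\<lambda>v. FS W S (\<lambda>x. v$x))"
    unfolding FS_def using pos
    by (intro continuous_intros) (auto simp: less_imp_neq[symmetric])
  obtain v where v: "v \<in> K" and vmax: "\<forall>w\<in>K. FS W S (\<lambda>x. w$x) \<le> FS W S (\<lambda>x. v$x)"
    using continuous_attains_sup[OF cpt Kne cont] by blast
  show ?thesis
  proof (intro bexI ballI)
    show "(\<lambda>x. v$x) \<in> face S" using v unfolding K_def by simp
    fix q assume q: "q \<in> face S"
    have eq: "($) (vec_lambda q) = q" by (rule ext) simp
    have "(\<chi> x. q x) \<in> K" unfolding K_def using q by (simp add: eq)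
    then have "FS W S (\<lambda>x. (\<chi> x. q x)$x) \<le> FS W S (\<lambda>x. v$x)" using vmax by blast
    then show "FS W S q \<le> FS W S (\<lambda>x. v$x)" by simp
  qed
qed

lemma Zf_face:
  fixes W :: "'x::finite \<Rightarrow> 'y::finite \<Rightarrow> real"
  assumes p: "p \<in> face S" and ppos: "\<And>x. x \<in> S \<Longrightarrow> p x > 0"
  shows "Zf W p = (\<Sum>y\<in>YS W S. exp (\<Sum>x\<in>S. p x * ln (W x y)))"
proof -
  have pz: "\<And>x. x \<notin> S \<Longrightarrow> p x = 0" using p unfolding face_def by auto
  have iff: "(\<forall>x. 0 < p x \<longrightarrow> 0 < W x y) \<longleftrightarrow> y \<in> YS W S" for y
  proof
    assume H: "\<forall>x. 0 < p x \<longrightarrow> 0 < W x y"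
    show "y \<in> YS W S" unfolding YS_def using H ppos by blast
  next
    assume H: "y \<in> YS W S"
    show "\<forall>x. 0 < p x \<longrightarrow> 0 < W x y"
    proof (intro allI impI)
      fix x assume "0 < p x"
      then have "x \<in> S" using pz by force
      then show "0 < W x y" using H unfolding YS_def by blast
    qed
  qed
  have sm: "(\<Sum>x\<in>UNIV. p x * ln (W x y)) = (\<Sum>x\<in>S. p x * ln (W x y))" for y
    by (rule sum.mono_neutral_right) (auto simp: pz)
  have "Zf W p = (\<Sum>y\<in>UNIV. if y \<in> YS W S then exp (\<Sum>x\<in>S. p x * ln (W x y)) else 0)"
    unfolding Zf_def gP_def using iff sm by (intro sum.cong) auto
  also have "\<dots> = (\<Sum>y\<in>YS W S. exp (\<Sum>x\<in>S. p x * ln (W x y)))"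
    by (simp add: sum.If_cases)
  finally show ?thesis .
qed

lemma face_distr: "p \<in> face S \<Longrightarrow> is_distr p"
  unfolding face_def is_distr_def by auto

lemma Fv_not_minf: "Fv W P \<noteq> - \<infinity>" unfolding Fv_def by simp

lemma YS_ne:
  fixes W :: "'x::finite \<Rightarrow> 'y::finite \<Rightarrow> real"
  assumes fin: "(SUP P\<in>{P. is_distr P}. Fv W P) \<noteq> \<infinity>" and Sne: "S \<noteq> {}"
  shows "YS W S \<noteq> {}"
proof
  assume Y: "YS W S = {}"
  define u where "u = (\<lambda>x. if x \<in> S then 1 / real (card S) else (0::real))"
  have uf: "u \<in> face S" unfolding u_def by (rule unif_face[OF Sne])
  have c: "card S > 0" using Sne by (simp add: card_gt_0_iff)
  have "Zf W u = (\<Sum>y\<in>YS W S. exp (\<Sum>x\<in>S. u x * ln (W x y)))"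
    by (rule Zf_face[OF uf]) (simp add: u_def c)
  then have "Zf W u = 0" using Y by simp
  then have "Fv W u = \<infinity>" unfolding Fv_def by simp
  moreover have "Fv W u \<le> (SUP P\<in>{P. is_distr P}. Fv W P)"
    using face_distr[OF uf] by (intro SUP_upper) auto
  ultimately show False using fin by simp
qed

lemma face_le_Us:
  fixes W :: "'x::finite \<Rightarrow> 'y::finite \<Rightarrow> real"
  assumes fin: "(SUP P\<in>{P. is_distr P}. Fv W P) \<noteq> \<infinity>" and Sne: "S \<noteq> {}" and p: "p \<in> face S"
  shows "ereal (FS W S p) \<le> (SUP P\<in>{P. is_distr P}. Fv W P)"
proof -
  define Us where "Us = (SUP P\<in>{P. is_distr P}. Fv W P)"
  define u where "u = (\<lambda>x. if x \<in> S then 1 / real (card S) else (0::real))"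
  have uf: "u \<in> face S" unfolding u_def by (rule unif_face[OF Sne])
  have c: "card S > 0" using Sne by (simp add: card_gt_0_iff)
  have Yne: "YS W S \<noteq> {}" by (rule YS_ne[OF fin Sne])
  have "Fv W u \<le> Us" unfolding Us_def using face_distr[OF uf] by (intro SUP_upper) auto
  then have "Us \<noteq> - \<infinity>" using Fv_not_minf[of W u] by auto
  moreover have "Us \<noteq> \<infinity>" using fin unfolding Us_def .
  ultimately obtain r where r: "Us = ereal r" by (cases Us) auto
  define v where "v t = (\<lambda>x. (1 - t) * p x + t * u x)" for t :: real
  define f where "f t = FS W S (v t)" for t
  have bound: "f t \<le> r" if t: "0 < t" "t < 1" for t
  proof -
    have p0: "\<forall>x. 0 \<le> p x" and pz: "\<forall>x. x \<notin> S \<longrightarrow> p x = 0" and p1: "sum p UNIV = 1"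
      using p unfolding face_def by auto
    have u0: "\<forall>x. 0 \<le> u x" and uz: "\<forall>x. x \<notin> S \<longrightarrow> u x = 0" and u1: "sum u UNIV = 1"
      using uf unfolding face_def by auto
    have vf: "v t \<in> face S" unfolding face_def v_def
      using p0 pz p1 u0 uz u1 t by (auto simp: sum.distrib sum_distrib_left[symmetric])
    have vpos: "v t x > 0" if "x \<in> S" for x
    proof -
      have "0 \<le> (1 - t) * p x" using p0 t by simp
      moreover have "t * u x > 0" using that t c by (simp add: u_def)
      ultimately show ?thesis unfolding v_def by simp
    qed
    have Zfe: "Zf W (v t) = (\<Sum>y\<in>YS W S. exp (\<Sum>x\<in>S. v t x * ln (W x y)))"
      by (rule Zf_face[OF vf]) (rule vpos)
    have Zp: "Zf W (v t) > 0" unfolding Zfe using Yne by (intro sum_pos) auto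
    have "Fv W (v t) = ereal (f t)"
      unfolding Fv_def f_def FS_def using Zp Zfe by simp
    moreover have "Fv W (v t) \<le> Us" unfolding Us_def using face_distr[OF vf] by (intro SUP_upper) auto
    ultimately show ?thesis using r by simp
  qed
  have pos: "(\<Sum>y\<in>YS W S. exp (\<Sum>x\<in>S. v t x * ln (W x y))) > 0" for t
    using Yne by (intro sum_pos) auto
  have "continuous (at 0) f"
    unfolding f_def FS_def v_def using pos[of 0]
    by (intro continuous_intros) (auto simp: v_def less_imp_neq[symmetric])
  then have "(f \<longlongrightarrow> f 0) (at 0)" by (simp add: continuous_at)
  then have lim: "(f \<longlongrightarrow> f 0) (at_right 0)" by (rule tendsto_within_subset) simp
  have ev: "eventually (\<lambda>t. f t \<le> r) (at_right 0)"
  proof -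
    have "eventually (\<lambda>t. t \<in> {0<..<1}) (at_right (0::real))" by (rule eventually_at_right_real) simp
    then show ?thesis by (rule eventually_mono) (use bound in auto)
  qed
  have "f 0 \<le> r" by (rule tendsto_upperbound[OF lim ev]) simp
  moreover have "f 0 = FS W S p" unfolding f_def v_def by simp
  ultimately show ?thesis using r unfolding Us_def by simp
qed



lemma face_mono: "p \<in> face S \<Longrightarrow> S \<subseteq> S' \<Longrightarrow> p \<in> face S'"
  unfolding face_def by auto

lemma sum_face_restrict:
  fixes p :: "'x::finite \<Rightarrow> real"
  assumes "p \<in> face S" "S \<subseteq> S'"
  shows "(\<Sum>x\<in>S'. p x * c x) = (\<Sum>x\<in>S. p x * c x)"
  using assms unfolding face_def by (intro sum.mono_neutral_right) auto

lemma minimax: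
  fixes W :: "'x::finite \<Rightarrow> 'y::finite \<Rightarrow> real"
  assumes chan: "is_channel W" and fin: "(SUP P\<in>{P. is_distr P}. Fv W P) \<noteq> \<infinity>"
  shows "\<exists>Q. is_distr Q \<and> (\<forall>x y. Q y > 0 \<longrightarrow> W x y > 0) \<and>
    (\<forall>x. ereal (\<Sum>y\<in>UNIV. Q y * ln (Q y / W x y)) \<le> (SUP P\<in>{P. is_distr P}. Fv W P))"
proof -
  define Us where "Us = (SUP P\<in>{P. is_distr P}. Fv W P)"
  have W0: "\<And>x y. 0 \<le> W x y" using chan_nonneg[OF chan] .
  have ex: "\<forall>S\<in>{S. S \<noteq> {}}. \<exists>p. p \<in> face S \<and> (\<forall>q\<in>face S. FS W S q \<le> FS W S p)"
  proof
    fix S :: "'x set" assume "S \<in> {S. S \<noteq> {}}"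
    then have Sne: "S \<noteq> {}" by simp
    obtain p where "p \<in> face S" "\<forall>q\<in>face S. FS W S q \<le> FS W S p"
      using face_max[OF Sne YS_ne[OF fin Sne]] by (elim bexE)
    then show "\<exists>p. p \<in> face S \<and> (\<forall>q\<in>face S. FS W S q \<le> FS W S p)" by (intro exI conjI)
  qed
  obtain ps where ps: "\<forall>S\<in>{S. S \<noteq> {}}. ps S \<in> face S \<and> (\<forall>q\<in>face S. FS W S q \<le> FS W S (ps S))"
    using bchoice[OF ex] by (elim exE) (rule that)
  have psS: "ps S \<in> face S" "\<And>q. q \<in> face S \<Longrightarrow> FS W S q \<le> FS W S (ps S)" if "S \<noteq> {}" for S
    using bspec[OF ps, of S] that by auto
  define m where "m S = FS W S (ps S)" for S
  define Sset where "Sset = {S :: 'x set. S \<noteq> {}}"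
  have fS: "finite Sset" unfolding Sset_def by simp
  have neS: "Sset \<noteq> {}" unfolding Sset_def by blast
  obtain S0 where S0: "S0 \<in> Sset" and S0max: "\<forall>S\<in>Sset. m S \<le> m S0"
  proof -
    have "Max (m ` Sset) \<in> m ` Sset" using fS neS by (intro Max_in) auto
    then obtain S0 where S0: "S0 \<in> Sset" and e: "m S0 = Max (m ` Sset)" by (elim imageE) simp
    have "\<forall>S\<in>Sset. m S \<le> Max (m ` Sset)" using fS by simp
    then have "\<forall>S\<in>Sset. m S \<le> m S0" unfolding e .
    then show ?thesis by (rule that[OF S0])
  qed
  have S0ne: "S0 \<noteq> {}" using S0 unfolding Sset_def by simp
  define p0 where "p0 = ps S0"
  have p0f: "p0 \<in> face S0" using psS(1)[OF S0ne] unfolding p0_def .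
  define Y0 where "Y0 = YS W S0"
  define a where "a y = (\<Sum>x\<in>S0. p0 x * ln (W x y))" for y
  define Zs where "Zs = (\<Sum>y\<in>Y0. exp (a y))"
  define \<Phi> where "\<Phi> = - ln Zs"
  have Y0ne: "Y0 \<noteq> {}" unfolding Y0_def by (rule YS_ne[OF fin S0ne])
  have Zpos: "Zs > 0" unfolding Zs_def using Y0ne by (intro sum_pos) auto
  have Phi_eq: "\<Phi> = FS W S0 p0" unfolding \<Phi>_def FS_def Zs_def a_def Y0_def ..
  have glob: "FS W S q \<le> \<Phi>" if "S \<noteq> {}" "q \<in> face S" for S q
  proof -
    have "FS W S q \<le> m S" unfolding m_def by (rule psS(2)[OF that])
    also have "\<dots> \<le> m S0" using S0max that unfolding Sset_def by simp
    finally show ?thesis unfolding Phi_eq m_def p0_def .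
  qed
  have PhiUs: "ereal \<Phi> \<le> Us" unfolding Phi_eq Us_def by (rule face_le_Us[OF fin S0ne p0f])
  have suppA: "W x0 y > 0" if y: "y \<in> Y0" for x0 y
  proof (rule ccontr)
    assume "\<not> W x0 y > 0"
    then have Wz: "W x0 y = 0" using W0[of x0 y] by simp
    define S' where "S' = insert x0 S0"
    have S'ne: "S' \<noteq> {}" unfolding S'_def by simp
    have pf: "p0 \<in> face S'" by (rule face_mono[OF p0f]) (auto simp: S'_def)
    have YS'ne: "YS W S' \<noteq> {}" by (rule YS_ne[OF fin S'ne])
    have sub: "YS W S' \<subseteq> Y0 - {y}" unfolding YS_def Y0_def S'_def using Wz by auto
    have "FS W S' p0 \<le> \<Phi>" by (rule glob[OF S'ne pf])
    moreover have "FS W S' p0 = - ln (\<Sum>y\<in>YS W S'. exp (a y))"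
    proof -
      have "(\<Sum>x\<in>S'. p0 x * ln (W x y)) = a y" for y
        unfolding a_def by (rule sum_face_restrict[OF p0f]) (auto simp: S'_def)
      then show ?thesis unfolding FS_def by simp
    qed
    ultimately have "- ln (\<Sum>y\<in>YS W S'. exp (a y)) \<le> - ln Zs" unfolding \<Phi>_def by simp
    moreover have "(\<Sum>y\<in>YS W S'. exp (a y)) > 0" using YS'ne by (intro sum_pos) auto
    ultimately have ge: "Zs \<le> (\<Sum>y\<in>YS W S'. exp (a y))" using Zpos by simp
    have "(\<Sum>y\<in>YS W S'. exp (a y)) \<le> (\<Sum>y\<in>Y0 - {y}. exp (a y))"
      using sub by (intro sum_mono2) auto
    also have "\<dots> = Zs - exp (a y)" unfolding Zs_def using y by (simp add: sum_diff1)
    finally show False using ge exp_gt_zero[of "a y"] by linarith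
  qed
  have kkt: "(\<Sum>y\<in>Y0. exp (a y) * (ln (W x0 y) - a y)) \<ge> 0" for x0
  proof (rule ccontr)
    define L where "L = (\<Sum>y\<in>Y0. exp (a y) * (ln (W x0 y) - a y))"
    assume "\<not> (\<Sum>y\<in>Y0. exp (a y) * (ln (W x0 y) - a y)) \<ge> 0"
    then have Lneg: "L < 0" unfolding L_def by simp
    define S' where "S' = insert x0 S0"
    have S'ne: "S' \<noteq> {}" unfolding S'_def by simp
    have YS': "YS W S' = Y0"
    proof
      show "YS W S' \<subseteq> Y0" unfolding YS_def Y0_def S'_def by auto
      show "Y0 \<subseteq> YS W S'"
      proof
        fix y assume y: "y \<in> Y0"
        then have "W x0 y > 0" by (rule suppA)
        then show "y \<in> YS W S'" using y unfolding Y0_def YS_def S'_def by auto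
      qed
    qed
    define \<phi> where "\<phi> t = (\<Sum>y\<in>Y0. exp (a y + t * (ln (W x0 y) - a y)))" for t
    have phi0: "\<phi> 0 = Zs" unfolding \<phi>_def Zs_def by simp
    have ge: "\<phi> t \<ge> Zs" if t: "0 \<le> t" "t \<le> 1" for t
    proof -
      define q where "q = (\<lambda>x. (1 - t) * p0 x + t * (if x = x0 then 1 else 0))"
      have p0': "\<forall>x. 0 \<le> p0 x" "\<forall>x. x \<notin> S0 \<longrightarrow> p0 x = 0" "sum p0 UNIV = 1" using p0f unfolding face_def by auto
      have qf: "q \<in> face S'" unfolding face_def q_def S'_def using p0' t
        by (auto simp: sum.distrib sum_distrib_left[symmetric])
      have qs: "(\<Sum>x\<in>S'. q x * ln (W x y)) = (1 - t) * a y + t * ln (W x0 y)" for y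
      proof -
        have "(\<Sum>x\<in>S'. q x * ln (W x y)) = (1 - t) * (\<Sum>x\<in>S'. p0 x * ln (W x y))
            + t * (\<Sum>x\<in>S'. (if x = x0 then 1 else 0) * ln (W x y))"
        proof -
          have "(\<Sum>x\<in>S'. q x * ln (W x y)) = (\<Sum>x\<in>S'. (1 - t) * (p0 x * ln (W x y)) + t * ((if x = x0 then 1 else 0) * ln (W x y)))"
            unfolding q_def by (intro sum.cong refl) (simp add: algebra_simps)
          also have "\<dots> = (1 - t) * (\<Sum>x\<in>S'. p0 x * ln (W x y)) + t * (\<Sum>x\<in>S'. (if x = x0 then 1 else 0) * ln (W x y))"
            by (simp only: sum.distrib sum_distrib_left)
          finally show ?thesis .
        qed
        also have "(\<Sum>x\<in>S'. p0 x * ln (W x y)) = a y"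
          unfolding a_def S'_def by (rule sum_face_restrict[OF p0f]) auto
        also have "(\<Sum>x\<in>S'. (if x = x0 then 1 else 0) * ln (W x y)) = ln (W x0 y)"
        proof -
          have "(\<Sum>x\<in>S'. (if x = x0 then 1 else 0) * ln (W x y)) = (\<Sum>x\<in>S'. if x = x0 then ln (W x y) else 0)"
            by (intro sum.cong refl) auto
          also have "\<dots> = ln (W x0 y)" unfolding S'_def by (simp add: sum.delta)
          finally show ?thesis .
        qed
        finally show ?thesis .
      qed
      have "FS W S' q \<le> \<Phi>" by (rule glob[OF S'ne qf])
      moreover have "(1 - t) * a y + t * ln (W x0 y) = a y + t * (ln (W x0 y) - a y)" for y
        by (simp add: algebra_simps)
      ultimately have "- ln (\<phi> t) \<le> - ln Zs" unfolding FS_def YS' qs \<phi>_def \<Phi>_def by simp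
      moreover have "\<phi> t > 0" unfolding \<phi>_def using Y0ne by (intro sum_pos) auto
      ultimately show ?thesis using Zpos by simp
    qed
    have der: "(\<phi> has_real_derivative L) (at 0)"
      unfolding \<phi>_def L_def by (rule derivative_eq_intros refl | simp)+
    obtain d where d: "d > 0" and dd: "\<forall>h>0. h < d \<longrightarrow> \<phi> 0 > \<phi> (0 + h)"
      using DERIV_neg_dec_right[OF der Lneg] by blast
    define h where "h = min (d / 2) (1 / 2)"
    have h: "h > 0" "h < d" "h \<le> 1" unfolding h_def using d by auto
    then have "\<phi> 0 > \<phi> h" using dd by auto
    moreover have "\<phi> h \<ge> Zs" using ge h by simp
    ultimately show False using phi0 by simp
  qed
  define Q where "Q y = (if y \<in> Y0 then exp (a y) / Zs else 0)" for y
  have Q0: "\<forall>y. 0 \<le> Q y" unfolding Q_def using Zpos by simp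
  have Q1: "sum Q UNIV = 1"
  proof -
    have "sum Q UNIV = (\<Sum>y\<in>Y0. exp (a y) / Zs)" unfolding Q_def by (simp add: sum.If_cases)
    also have "\<dots> = 1" unfolding Zs_def sum_divide_distrib[symmetric] using Zpos unfolding Zs_def by simp
    finally show ?thesis .
  qed
  have Qd: "is_distr Q" unfolding is_distr_def using Q0 Q1 by simp
  have Qsupp: "\<forall>x y. Q y > 0 \<longrightarrow> W x y > 0"
  proof (intro allI impI)
    fix x y assume "Q y > 0"
    then have "y \<in> Y0" unfolding Q_def by (auto split: if_splits)
    then show "W x y > 0" by (rule suppA)
  qed
  have Dle: "ereal (\<Sum>y\<in>UNIV. Q y * ln (Q y / W x0 y)) \<le> Us" for x0
  proof -
    have "(\<Sum>y\<in>UNIV. Q y * ln (Q y / W x0 y)) = (\<Sum>y\<in>Y0. exp (a y) / Zs * (a y - ln Zs - ln (W x0 y)))"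
    proof -
      have "(\<Sum>y\<in>UNIV. Q y * ln (Q y / W x0 y))
          = (\<Sum>y\<in>UNIV. if y \<in> Y0 then exp (a y) / Zs * (a y - ln Zs - ln (W x0 y)) else 0)"
      proof (rule sum.cong[OF refl])
        fix y
        show "Q y * ln (Q y / W x0 y) = (if y \<in> Y0 then exp (a y) / Zs * (a y - ln Zs - ln (W x0 y)) else 0)"
        proof (cases "y \<in> Y0")
          case True
          have w: "W x0 y > 0" by (rule suppA[OF True])
          have "ln (Q y / W x0 y) = a y - ln Zs - ln (W x0 y)"
            unfolding Q_def using True Zpos w by (simp add: ln_div ln_mult)
          then show ?thesis using True unfolding Q_def by simp
        next
          case False then show ?thesis unfolding Q_def by simp
        qed
      qed
      also have "\<dots> = (\<Sum>y\<in>Y0. exp (a y) / Zs * (a y - ln Zs - ln (W x0 y)))" by (simp add: sum.If_cases)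
      finally show ?thesis .
    qed
    also have "\<dots> = (\<Sum>y\<in>Y0. (- (exp (a y) * (ln (W x0 y) - a y))) / Zs - ln Zs * (exp (a y) / Zs))"
      using Zpos by (intro sum.cong refl) (simp add: field_simps)
    also have "\<dots> = (\<Sum>y\<in>Y0. - (exp (a y) * (ln (W x0 y) - a y))) / Zs - ln Zs * ((\<Sum>y\<in>Y0. exp (a y)) / Zs)"
      by (simp only: sum_subtractf sum_divide_distrib[symmetric] sum_distrib_left[symmetric])
    also have "(\<Sum>y\<in>Y0. - (exp (a y) * (ln (W x0 y) - a y))) = - (\<Sum>y\<in>Y0. exp (a y) * (ln (W x0 y) - a y))"
      by (rule sum_negf)
    also have "(\<Sum>y\<in>Y0. exp (a y)) / Zs = 1" using Zpos unfolding Zs_def by simp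
    also have "- (\<Sum>y\<in>Y0. exp (a y) * (ln (W x0 y) - a y)) / Zs - ln Zs * 1 \<le> \<Phi>"
      using kkt[of x0] Zpos unfolding \<Phi>_def by (simp add: divide_nonneg_pos)
    finally have "(\<Sum>y\<in>UNIV. Q y * ln (Q y / W x0 y)) \<le> \<Phi>" .
    then have "ereal (\<Sum>y\<in>UNIV. Q y * ln (Q y / W x0 y)) \<le> ereal \<Phi>" by simp
    also have "\<dots> \<le> Us" by (rule PhiUs)
    finally show ?thesis .
  qed
  show ?thesis using Qd Qsupp Dle unfolding Us_def by blast
qed



lemma chan_le1: "is_channel W \<Longrightarrow> W x y \<le> (1::real)"
proof -
  assume c: "is_channel W"
  have "W x y \<le> (\<Sum>y'\<in>UNIV. W x y')"
    by (rule member_le_sum) (auto intro: chan_nonneg[OF c])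
  then show ?thesis using chan_sum[OF c] by simp
qed

lemma rate_lower:
  fixes e B c :: real and n :: nat
  assumes n: "n > 0" and eB: "e \<le> B ^ n * exp (real n * \<delta>)" and Bp: "B > 0" and c: "c \<le> - ln B - \<delta>"
  shows "ereal c \<le> neg_log_rate n e"
proof (cases "e \<le> 0")
  case True then show ?thesis unfolding neg_log_rate_def by simp
next
  case False
  then have ep: "e > 0" by simp
  have "ln e \<le> ln (B ^ n * exp (real n * \<delta>))" using ep eB Bp by simp
  also have "\<dots> = real n * ln B + real n * \<delta>" using Bp by (simp add: ln_mult ln_realpow)
  finally have "ln e \<le> real n * (ln B + \<delta>)" by (simp add: algebra_simps)
  then have "- ln e / real n \<ge> - (ln B + \<delta>)" using n by (simp add: field_simps)
  then show ?thesis unfolding neg_log_rate_def using False c by simp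
qed

lemma ach_rate:
  fixes W :: "'x::finite \<Rightarrow> 'y::finite \<Rightarrow> real"
  assumes chan: "is_channel W" and P: "is_distr P" and M: "M \<ge> 2" and c: "ereal c < Fv W P"
  shows "eventually (\<lambda>n. ereal c \<le> neg_log_rate n (eps_NS M (words n) (words n) (channel_pow n W))) sequentially"
proof -
  have P0: "\<And>x. 0 \<le> P x" and P1: "sum P UNIV = 1" using P unfolding is_distr_def by auto
  define Zp where "Zp = Zf W P"
  define cy where "cy = real (card (UNIV :: 'y set))"
  have "card (UNIV :: 'y set) > 0" by (simp add: card_gt_0_iff)
  then have cy: "cy \<ge> 1" unfolding cy_def by linarith
  have Zp0: "Zp \<ge> 0" unfolding Zp_def by (rule Zf_nonneg)
  obtain \<epsilon> \<delta> where e: "\<epsilon> > 0" and d: "\<delta> > 0" and key: "- ln (Zp + \<epsilon>) - \<delta> > c"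
  proof (cases "Zp = 0")
    case True
    show ?thesis
    proof (rule that[of "exp (- (c + 2))" 1])
      show "- ln (Zp + exp (- (c + 2))) - 1 > c" using True by simp
    qed auto
  next
    case False
    then have Zpos: "Zp > 0" using Zp0 by simp
    have "ereal c < ereal (- ln Zp)" using c False unfolding Fv_def Zp_def by simp
    then have cl: "c < - ln Zp" by simp
    define \<eta> where "\<eta> = - ln Zp - c"
    have eta: "\<eta> > 0" unfolding \<eta>_def using cl by simp
    show ?thesis
    proof (rule that[of "Zp * (exp (\<eta> / 3) - 1)" "\<eta> / 3"])
      show "0 < Zp * (exp (\<eta> / 3) - 1)" using Zpos eta by simp
      show "0 < \<eta> / 3" using eta by simp
      have "Zp + Zp * (exp (\<eta> / 3) - 1) = Zp * exp (\<eta> / 3)" by (simp add: algebra_simps)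
      then have "- ln (Zp + Zp * (exp (\<eta> / 3) - 1)) = - ln Zp - \<eta> / 3" using Zpos by (simp add: ln_mult)
      then show "- ln (Zp + Zp * (exp (\<eta> / 3) - 1)) - \<eta> / 3 > c" using eta \<eta>_def by linarith
    qed
  qed
  have Pex: "\<exists>x. P x > 0"
  proof (rule ccontr)
    assume "\<not> (\<exists>x. P x > 0)"
    then have "\<And>x. P x = 0" using P0 by (metis less_eq_real_def)
    then show False using P1 by simp
  qed
  define pmin where "pmin = Min {P x | x. P x > 0}"
  have fpm: "finite {P x | x. P x > 0}" by simp
  have pmin_pos: "pmin > 0" unfolding pmin_def using fpm Pex by (subst Min_gr_iff) auto
  have pmin_le: "pmin \<le> P x" if "P x > 0" for x unfolding pmin_def using fpm that by (intro Min_le) auto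
  define K where "K = (\<Sum>x\<in>UNIV. \<Sum>y\<in>UNIV. \<bar>ln (W x y)\<bar>)"
  have K: "\<bar>ln (W x y)\<bar> \<le> K" for x y
  proof -
    have "\<bar>ln (W x y)\<bar> \<le> (\<Sum>y\<in>UNIV. \<bar>ln (W x y)\<bar>)" by (rule member_le_sum) auto
    also have "\<dots> \<le> K" unfolding K_def by (rule member_le_sum) (auto intro: sum_nonneg)
    finally show ?thesis .
  qed
  define L where "L = max K ((ln cy - ln \<epsilon>) / pmin)"
  have LK: "L \<ge> K" unfolding L_def by simp
  have K0: "K \<ge> 0" unfolding K_def by (auto intro: sum_nonneg)
  have L0: "L \<ge> 0" using LK K0 by simp
  have Lc: "cy * exp (- pmin * L) \<le> \<epsilon>"
  proof -
    have "(ln cy - ln \<epsilon>) / pmin \<le> L" unfolding L_def by simp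
    then have "pmin * L \<ge> ln cy - ln \<epsilon>" using pmin_pos
      by (simp add: pos_divide_le_eq mult.commute)
    then have "exp (ln cy - ln \<epsilon>) \<le> exp (pmin * L)" by simp
    then have "cy / \<epsilon> \<le> exp (pmin * L)" using cy e by (simp add: exp_diff)
    then have "cy \<le> \<epsilon> * exp (pmin * L)" using e by (simp add: divide_le_eq mult.commute)
    then show ?thesis by (simp add: exp_minus field_simps)
  qed
  define l where "l x y = (if W x y = 0 then - L else max (ln (W x y)) (- L))" for x y
  define \<mu> where "\<mu> y = (\<Sum>x\<in>UNIV. P x * l x y)" for y
  have mu_le: "exp (\<mu> y) \<le> gP W P y + exp (- pmin * L)" for y
  proof (cases "\<forall>x. 0 < P x \<longrightarrow> 0 < W x y")
    case True
    have "\<mu> y = (\<Sum>x\<in>UNIV. P x * ln (W x y))"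
      unfolding \<mu>_def
    proof (rule sum.cong[OF refl])
      fix x
      show "P x * l x y = P x * ln (W x y)"
      proof (cases "P x > 0")
        case True': True
        then have w: "W x y > 0" using True by blast
        have "- L \<le> ln (W x y)" using K[of x y] LK by linarith
        then show ?thesis unfolding l_def using w by simp
      next
        case False then have "P x = 0" using P0[of x] by simp
        then show ?thesis by simp
      qed
    qed
    then have "exp (\<mu> y) = gP W P y" unfolding gP_def using True by simp
    then show ?thesis by simp
  next
    case False
    then obtain x0 where x0: "P x0 > 0" "\<not> W x0 y > 0" by blast
    then have Wz: "W x0 y = 0" using chan_nonneg[OF chan, of x0 y] by simp
    have lnp: "l x y \<le> 0" for x
    proof -
      have "ln (W x y) \<le> 0" if "W x y \<noteq> 0" using chan_le1[OF chan, of x y] chan_nonneg[OF chan, of x y] that by simp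
      then show ?thesis unfolding l_def using L0 by auto
    qed
    have "\<mu> y \<le> P x0 * l x0 y"
    proof -
      have "\<mu> y = P x0 * l x0 y + (\<Sum>x\<in>UNIV - {x0}. P x * l x y)"
        unfolding \<mu>_def by (simp add: sum.remove[of UNIV x0])
      moreover have "(\<Sum>x\<in>UNIV - {x0}. P x * l x y) \<le> 0"
        using P0 lnp by (intro sum_nonpos) (simp add: mult_nonneg_nonpos)
      ultimately show ?thesis by simp
    qed
    also have "P x0 * l x0 y = - P x0 * L" unfolding l_def using Wz by simp
    also have "\<dots> \<le> - pmin * L" using pmin_le[OF x0(1)] L0 by (simp add: mult_right_mono)
    finally have "exp (\<mu> y) \<le> exp (- pmin * L)" by simp
    then show ?thesis using gP_nonneg[of W P y] by linarith
  qed
  define S where "S = (\<Sum>y\<in>UNIV. exp (\<mu> y))"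
  have Spos: "S > 0" unfolding S_def by (intro sum_pos) auto
  have "S \<le> (\<Sum>y\<in>UNIV. gP W P y + exp (- pmin * L))" unfolding S_def by (intro sum_mono mu_le)
  also have "\<dots> = Zp + cy * exp (- pmin * L)" unfolding Zp_def Zf_def cy_def by (simp add: sum.distrib)
  also have "\<dots> \<le> Zp + \<epsilon>" using Lc by simp
  finally have SZ: "S \<le> Zp + \<epsilon>" .
  have cS: "c \<le> - ln S - \<delta>"
  proof -
    have "ln S \<le> ln (Zp + \<epsilon>)" using SZ Spos by simp
    then show ?thesis using key by simp
  qed
  obtain N where N: "\<forall>n\<ge>N. eps_NS M (words n) (words n) (channel_pow n W) \<le> exp (real n * \<delta>) * S ^ n"
    using ach[OF chan P0 P1 M d, of L] unfolding S_def \<mu>_def l_def by blast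
  show ?thesis
    unfolding eventually_sequentially
  proof (intro exI allI impI)
    fix n assume n: "max N 1 \<le> n"
    show "ereal c \<le> neg_log_rate n (eps_NS M (words n) (words n) (channel_pow n W))"
      by (rule rate_lower[OF _ _ Spos cS]) (use N n in \<open>auto simp: mult.commute\<close>)
  qed
qed



lemma conv_rate:
  fixes W :: "'x::finite \<Rightarrow> 'y::finite \<Rightarrow> real" and Q :: "'y \<Rightarrow> real"
  assumes chan: "is_channel W" and M: "M \<ge> 2" and Q: "is_distr Q"
    and supp: "\<And>x y. Q y > 0 \<Longrightarrow> W x y > 0"
    and Dle: "\<And>x. (\<Sum>y\<in>UNIV. Q y * ln (Q y / W x y)) \<le> u"
    and d: "\<delta> > 0"
  shows "eventually (\<lambda>n. neg_log_rate n (eps_NS M (words n) (words n) (channel_pow n W)) \<le> ereal (u + 2 * \<delta>)) sequentially"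
proof -
  have Q0: "\<And>y. 0 \<le> Q y" and Q1: "sum Q UNIV = 1" using Q unfolding is_distr_def by auto
  define c where "c = (1 - 1 / real M) / 2"
  have Mr: "real M \<ge> 2" using M by simp
  have c0: "c > 0" unfolding c_def using Mr by (simp add: field_simps)
  have c1: "c < 1" unfolding c_def using Mr by (simp add: field_simps)
  obtain N1 where N1: "\<forall>n\<ge>N1. \<forall>xs\<in>words n.
     (\<Sum>ys\<in>words n. if pw Q n ys > exp (real n * (u + \<delta>)) * channel_pow n W xs ys then pw Q n ys else 0) \<le> c"
    using conv_tail[OF chan Q0 Q1 supp Dle d c0] by blast
  obtain N2 :: nat where N2: "real N2 \<ge> - ln c / \<delta>" using real_arch_simple by blast
  show ?thesis
    unfolding eventually_sequentially
  proof (intro exI allI impI)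
    fix n assume n: "max (max N1 N2) 1 \<le> n"
    have npos: "real n > 0" using n by simp
    define A where "A = (words n :: 'x list set)"
    define B where "B = (words n :: 'y list set)"
    define Wn where "Wn = channel_pow n W"
    define g where "g = real n * (u + \<delta>)"
    have fA: "finite A" and fB: "finite B" unfolding A_def B_def by simp_all
    have Ane: "A \<noteq> {}" and Bne: "B \<noteq> {}" unfolding A_def B_def by (simp_all add: words_ne)
    have W1: "\<And>x. x \<in> A \<Longrightarrow> (\<Sum>y\<in>B. Wn x y) = 1" unfolding B_def Wn_def by (rule chpow_sum[OF chan])
    have Wn0: "\<And>x y. 0 \<le> Wn x y" unfolding Wn_def by (rule chpow_nonneg[OF chan])
    obtain y0 where y0: "y0 \<in> B" using Bne by blast
    have lb: "exp (- g) * c \<le> eps_NS M A B Wn"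
    proof (rule eps_ge)
      show "\<exists>Z. is_NS_code M A B Z" by (rule code_exists[OF M fA fB Ane]) (rule W1)
    next
      fix Z assume Z: "is_NS_code M A B Z"
      have M1: "M \<ge> 1" using M by simp
      obtain P T where H: "(\<forall>x\<in>A. 0 \<le> P x) \<and> sum P A = 1 \<and>
         (\<forall>x\<in>A. \<forall>y\<in>B. 0 \<le> T x y \<and> T x y \<le> P x) \<and>
         (\<forall>y\<in>B. (\<Sum>x\<in>A. T x y) = 1 - 1 / real M) \<and>
         NS_error M A B Wn Z = (\<Sum>x\<in>A. \<Sum>y\<in>B. Wn x y * T x y)"
      proof -
        have "\<exists>P T. (\<forall>x\<in>A. 0 \<le> P x) \<and> sum P A = 1 \<and>
         (\<forall>x\<in>A. \<forall>y\<in>B. 0 \<le> T x y \<and> T x y \<le> P x) \<and>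
         (\<forall>y\<in>B. (\<Sum>x\<in>A. T x y) = 1 - 1 / real M) \<and>
         NS_error M A B Wn Z = (\<Sum>x\<in>A. \<Sum>y\<in>B. Wn x y * T x y)"
          by (rule NS_extract[OF M1 fA fB y0 Z]) (rule W1)
        then show ?thesis by (elim exE) (rule that)
      qed
      have P0: "\<forall>x\<in>A. 0 \<le> P x" and P1: "sum P A = 1"
        and T: "\<forall>x\<in>A. \<forall>y\<in>B. 0 \<le> T x y \<and> T x y \<le> P x"
        and Ts: "\<forall>y\<in>B. (\<Sum>x\<in>A. T x y) = 1 - 1 / real M"
        and err: "NS_error M A B Wn Z = (\<Sum>x\<in>A. \<Sum>y\<in>B. Wn x y * T x y)" using H by simp_all
      have pQ1: "sum (pw Q n) B = 1" unfolding B_def by (rule sum_pw[OF Q1])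
      have cb: "(\<Sum>x\<in>A. \<Sum>y\<in>B. Wn x y * T x y) \<ge>
          exp (- g) * ((1 - 1 / real M) - (\<Sum>x\<in>A. \<Sum>y\<in>B. if pw Q n y > exp g * Wn x y then P x * pw Q n y else 0))"
        by (rule conv_bound[OF fA fB Wn0]) (use T Ts pQ1 pw_nonneg[of Q, OF Q0] in auto)
      have inner: "(\<Sum>x\<in>A. \<Sum>y\<in>B. if pw Q n y > exp g * Wn x y then P x * pw Q n y else 0) \<le> c"
      proof -
        have "(\<Sum>x\<in>A. \<Sum>y\<in>B. if pw Q n y > exp g * Wn x y then P x * pw Q n y else 0)
            = (\<Sum>x\<in>A. P x * (\<Sum>y\<in>B. if pw Q n y > exp g * Wn x y then pw Q n y else 0))"
          by (simp add: sum_distrib_left if_distrib cong: if_cong)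
        also have "\<dots> \<le> (\<Sum>x\<in>A. P x * c)"
        proof (rule sum_mono)
          fix x assume x: "x \<in> A"
          have "(\<Sum>y\<in>B. if pw Q n y > exp g * Wn x y then pw Q n y else 0) \<le> c"
            using N1 n x unfolding A_def B_def Wn_def g_def by auto
          then show "P x * (\<Sum>y\<in>B. if pw Q n y > exp g * Wn x y then pw Q n y else 0) \<le> P x * c"
            using P0 x by (intro mult_left_mono) auto
        qed
        also have "\<dots> = c" using P1 by (simp add: sum_distrib_right[symmetric])
        finally show ?thesis .
      qed
      have "exp (- g) * c \<le> exp (- g) * ((1 - 1 / real M) - (\<Sum>x\<in>A. \<Sum>y\<in>B. if pw Q n y > exp g * Wn x y then P x * pw Q n y else 0))"
        using inner unfolding c_def by (intro mult_left_mono) auto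
      then show "exp (- g) * c \<le> NS_error M A B Wn Z" using cb err by linarith
    qed
    have bpos: "exp (- g) * c > 0" using c0 by simp
    have epos: "eps_NS M A B Wn > 0" using lb bpos by linarith
    have "ln (exp (- g) * c) \<le> ln (eps_NS M A B Wn)" using lb bpos by simp
    then have "- ln (eps_NS M A B Wn) \<le> g - ln c" using c0 by (simp add: ln_mult)
    then have "- ln (eps_NS M A B Wn) / real n \<le> (g - ln c) / real n" using npos by (intro divide_right_mono) auto
    also have "(g - ln c) / real n = u + \<delta> + (- ln c) / real n" unfolding g_def using npos by (simp add: field_simps)
    also have "(- ln c) / real n \<le> \<delta>"
    proof -
      have "(- ln c) / \<delta> \<le> real n" using N2 n by (simp add: minus_divide_left[symmetric])
      then have "- ln c \<le> real n * \<delta>" by (subst (asm) pos_divide_le_eq[OF d])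
      then show ?thesis by (subst pos_divide_le_eq[OF npos]) (simp add: mult.commute)
    qed
    finally have "- ln (eps_NS M A B Wn) / real n \<le> u + 2 * \<delta>" by simp
    then show "neg_log_rate n (eps_NS M (words n) (words n) (channel_pow n W)) \<le> ereal (u + 2 * \<delta>)"
      unfolding neg_log_rate_def A_def B_def Wn_def using epos unfolding A_def B_def Wn_def by simp
  qed
qed



theorem mainTheorem2:
  fixes W :: "'x::finite \<Rightarrow> 'y::finite \<Rightarrow> real" and M :: nat
  assumes "is_channel W" and "M \<ge> 2"
  shows "liminf (\<lambda>n. neg_log_rate n (eps_NS M (words n) (words n) (channel_pow n W)))
           = umlaut_info W"
proof -
  note chan = assms(1) and M = assms(2)
  define r where "r n = neg_log_rate n (eps_NS M (words n) (words n) (channel_pow n W))" for n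
  define Us where "Us = (SUP P\<in>{P. is_distr P}. Fv W P)"
  have U: "umlaut_info W = Us" unfolding Us_def by (rule umlaut_eq[OF chan])
  have ge: "Us \<le> liminf r"
    unfolding Us_def
  proof (rule SUP_least)
    fix P :: "'x \<Rightarrow> real" assume P: "P \<in> {P. is_distr P}"
    show "Fv W P \<le> liminf r"
    proof (rule dense_le)
      fix x assume x: "x < Fv W P"
      show "x \<le> liminf r"
      proof (cases x)
        case (real c)
        then show ?thesis unfolding r_def
          using ach_rate[OF chan _ M, of P c] P x by (intro Liminf_bounded) auto
      next
        case PInf then show ?thesis using x by simp
      next
        case MInf then show ?thesis by simp
      qed
    qed
  qed
  have le: "liminf r \<le> Us"
  proof (cases "Us = \<infinity>")
    case True then show ?thesis by simp
  next
    case False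
    have fin: "(SUP P\<in>{P. is_distr P}. Fv W P) \<noteq> \<infinity>" using False unfolding Us_def .
    obtain Q where Qd: "is_distr Q" and supp: "\<forall>x y. Q y > 0 \<longrightarrow> W x y > 0"
      and Dle: "\<forall>x. ereal (\<Sum>y\<in>UNIV. Q y * ln (Q y / W x y)) \<le> Us"
      using minimax[OF chan fin] unfolding Us_def by blast
    define u0 where "u0 = (\<lambda>x::'x. 1 / real (card (UNIV :: 'x set)))"
    have "u0 \<in> face (UNIV :: 'x set)" unfolding u0_def using unif_face[of "UNIV :: 'x set"] by simp
    then have "Fv W u0 \<le> Us" unfolding Us_def using face_distr by (intro SUP_upper) auto
    then have "Us \<noteq> - \<infinity>" using Fv_not_minf[of W u0] by auto
    then obtain u where u: "Us = ereal u" using False by (cases Us) auto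
    have Dle': "(\<Sum>y\<in>UNIV. Q y * ln (Q y / W x y)) \<le> u" for x using Dle u by simp
    show ?thesis
    proof (rule ereal_le_epsilon2)
      fix e :: real assume e: "e > 0"
      have ev: "eventually (\<lambda>n. r n \<le> ereal (u + 2 * (e / 2))) sequentially"
        unfolding r_def using e by (intro conv_rate[OF chan M Qd _ Dle']) (use supp in auto)
      have "liminf r \<le> limsup r" by (rule Liminf_le_Limsup) simp
      also have "\<dots> \<le> ereal (u + 2 * (e / 2))" by (rule Limsup_bounded[OF ev])
      finally show "liminf r \<le> Us + ereal e" using u by simp
    qed
  qed
  show ?thesis using ge le U unfolding r_def by simp
qed


end
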